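(* Assume the setup below. If $b<e_K$, then $1+(\beta/2)(x-1)\mathfrak P_L\subseteq(1+\mathfrak P_M)^2\,(1+(\beta/2)(Y-1)\mathfrak P_M)$. For every $b$, $1+\beta\mathfrak P_L\subseteq(1+\mathfrak P_M)^2\,(1+(x-1)(Y-1)\mathfrak P_M)$. Consequently the inclusion $L\subseteq M$ induces well-defined homomorphisms $\mathcal L\to\mathcal M$ (when $b<e_K$) and $\mathcal L^*\to\mathcal M^*$.
   Context: $K$ is a finite extension of $\mathbb{Q}_2$, $e_K$ its absolute ramification index, $T$ its maximal unramified subextension, $q=2^{[T:\mathbb{Q}_2]}$; $\mathfrak P_F$ the maximal ideal of a field $F$. Setup: $M/K$ fully ramified biquadratic with a single break $b$, $M=K(x,y)$, $x^2=1+\beta$, $y^2=(1+(\omega+\mu)^2\beta)(1+4\lambda)$, $v_K(\beta)=2e_K-b$, $\omega\in\mathfrak O_T$ a $(q-1)$-th root of unity $\ne1$, $\mu\in K$ either $0$ or $0<v_K(\mu)<b/2$, $\lambda\in\mathfrak O_T$ either $0$ or a $(q-1)$-th root of unity with $z^2+z=\lambda$ irreducible over $T$; $L=K(x)$; $Y\in M$ defined by $yY=1+(\omega+\mu)(x-1)$. Groups: $\mathcal L=(1+\mathfrak P_L)/[(1+\mathfrak P_K)(1+\mathfrak P_L)^2(1+(\beta/2)(x-1)\mathfrak P_L)]$ and $\mathcal M=(1+\mathfrak P_M)/[(1+\mathfrak P_K)(1+\mathfrak P_M)^2(1+(\beta/2)(Y-1)\mathfrak P_M)]$ (for $b<e_K$);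 $\mathcal L^*=(1+\mathfrak P_L)/[(1+\mathfrak P_K)(1+\mathfrak P_L)^2(1+\beta\mathfrak P_L)]$ and $\mathcal M^*=(1+\mathfrak P_M)/[(1+\mathfrak P_K)(1+\mathfrak P_M)^2(1+(x-1)(Y-1)\mathfrak P_M)]$. *)

theory Defs
  imports Main
begin

text \<open>The ambient field is the type 'a; the top field M is the whole type.
  Valuations are functions v :: 'a => int whose value at 0 is irrelevant
  (0 is treated as having valuation +infinity via vge).\<close>

definition vge :: "('a::field \<Rightarrow> int) \<Rightarrow> int \<Rightarrow> 'a \<Rightarrow> bool" where
  "vge v n t \<longleftrightarrow> t = 0 \<or> n \<le> v t"

definition discrete_valuation :: "('a::field \<Rightarrow> int) \<Rightarrow> bool" where
  "discrete_valuation v \<longleftrightarrow>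
     (\<forall>a b. a \<noteq> 0 \<longrightarrow> b \<noteq> 0 \<longrightarrow> v (a * b) = v a + v b) \<and>
     (\<forall>a b. a \<noteq> 0 \<longrightarrow> b \<noteq> 0 \<longrightarrow> a + b \<noteq> 0 \<longrightarrow> min (v a) (v b) \<le> v (a + b)) \<and>
     (\<exists>p. p \<noteq> 0 \<and> v p = 1)"

definition val_cauchy :: "('a::field \<Rightarrow> int) \<Rightarrow> (nat \<Rightarrow> 'a) \<Rightarrow> bool" where
  "val_cauchy v s \<longleftrightarrow> (\<forall>N. \<exists>n0. \<forall>m\<ge>n0. \<forall>n\<ge>n0. vge v N (s m - s n))"

definition val_converges :: "('a::field \<Rightarrow> int) \<Rightarrow> (nat \<Rightarrow> 'a) \<Rightarrow> 'a \<Rightarrow> bool" where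
  "val_converges v s l \<longleftrightarrow> (\<forall>N. \<exists>n0. \<forall>n\<ge>n0. vge v N (s n - l))"

definition val_complete :: "('a::field \<Rightarrow> int) \<Rightarrow> bool" where
  "val_complete v \<longleftrightarrow> (\<forall>s. val_cauchy v s \<longrightarrow> (\<exists>l. val_converges v s l))"

definition val_closed :: "('a::field \<Rightarrow> int) \<Rightarrow> 'a set \<Rightarrow> bool" where
  "val_closed v E \<longleftrightarrow> (\<forall>s l. (\<forall>n. s n \<in> E) \<longrightarrow> val_converges v s l \<longrightarrow> l \<in> E)"

text \<open>Cardinality of the residue field of the valued subfield F: the least size of a
  set of representatives of O_F / P_F.\<close>
definition residue_card :: "('a::field \<Rightarrow> int) \<Rightarrow> 'a set \<Rightarrow> nat" where
  "residue_card v F = (LEAST n. \<exists>R. finite R \<and> card R = n \<and> R \<subseteq> {a\<in>F. vge v 0 a} \<and>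
       (\<forall>a\<in>F. vge v 0 a \<longrightarrow> (\<exists>r\<in>R. vge v 1 (a - r))))"

definition finite_residue :: "('a::field \<Rightarrow> int) \<Rightarrow> bool" where
  "finite_residue v \<longleftrightarrow> (\<exists>R. finite R \<and> (\<forall>a. vge v 0 a \<longrightarrow> (\<exists>r\<in>R. vge v 1 (a - r))))"

definition subfield :: "'a::field set \<Rightarrow> bool" where
  "subfield F \<longleftrightarrow> 0 \<in> F \<and> 1 \<in> F \<and> (\<forall>a\<in>F. \<forall>b\<in>F. a + b \<in> F \<and> a * b \<in> F) \<and>
     (\<forall>a\<in>F. - a \<in> F \<and> inverse a \<in> F)"

definition gen_field :: "'a::field set \<Rightarrow> 'a set \<Rightarrow> 'a set" where
  "gen_field F S = \<Inter>{E. subfield E \<and> F \<subseteq> E \<and> S \<subseteq> E}"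

definition degree_over :: "'a::field set \<Rightarrow> nat \<Rightarrow> bool" where
  "degree_over F n \<longleftrightarrow> (\<exists>f :: nat \<Rightarrow> 'a. \<forall>z. \<exists>!c. (\<forall>i<n. c i \<in> F) \<and> (\<forall>i\<ge>n. c i = 0) \<and>
       z = (\<Sum>i<n. c i * f i))"

definition field_aut :: "('a::field \<Rightarrow> 'a) \<Rightarrow> bool" where
  "field_aut s \<longleftrightarrow> bij s \<and> (\<forall>a b. s (a + b) = s a + s b \<and> s (a * b) = s a * s b) \<and> s 1 = 1"

definition galois_group :: "'a::field set \<Rightarrow> ('a \<Rightarrow> 'a) set" where
  "galois_group F = {s. field_aut s \<and> (\<forall>a\<in>F. s a = a)}"

definition unramified_over_Q2 :: "('a::field_char_0 \<Rightarrow> int) \<Rightarrow> 'a set \<Rightarrow> bool" where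
  "unramified_over_Q2 v E \<longleftrightarrow> v ` (E - {0}) = {n * v 2 | n. True}"

definition max_unram_sub :: "('a::field_char_0 \<Rightarrow> int) \<Rightarrow> 'a set \<Rightarrow> 'a set \<Rightarrow> bool" where
  "max_unram_sub v K T \<longleftrightarrow> subfield T \<and> val_closed v T \<and> T \<subseteq> K \<and> unramified_over_Q2 v T \<and>
     (\<forall>E. subfield E \<and> val_closed v E \<and> T \<subseteq> E \<and> E \<subseteq> K \<and> unramified_over_Q2 v E \<longrightarrow> E = T)"

text \<open>The monic quadratic z^2 + z - c is irreducible over F: it has no factorization
  (z - a)(z - b) with a, b in F (the only possible factorization into non-units).\<close>
definition irred_artin_schreier :: "'a::field set \<Rightarrow> 'a \<Rightarrow> bool" where
  "irred_artin_schreier F c \<longleftrightarrow> \<not> (\<exists>a\<in>F. \<exists>b\<in>F. a + b = -1 \<and> a * b = - c)"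

definition setmul :: "'a::field set \<Rightarrow> 'a set \<Rightarrow> 'a set" where
  "setmul A B = {a * b | a b. a \<in> A \<and> b \<in> B}"

definition squares :: "'a::field set \<Rightarrow> 'a set" where
  "squares A = {a * a | a. a \<in> A}"

definition one_plus :: "('a::field \<Rightarrow> int) \<Rightarrow> 'a \<Rightarrow> 'a set \<Rightarrow> 'a set" where
  "one_plus v c F = {1 + c * t | t. t \<in> F \<and> vge v 1 t}"

end

theory Submission
  imports Defs
begin

locale dval = fixes v :: "'a::field_char_0 \<Rightarrow> int" assumes dv: "discrete_valuation v"
begin

lemma vmult: "a \<noteq> 0 \<Longrightarrow> b \<noteq> 0 \<Longrightarrow> v (a*b) = v a + v b"
  using dv unfolding discrete_valuation_def by blast

lemma vadd: "a \<noteq> 0 \<Longrightarrow> b \<noteq> 0 \<Longrightarrow> a + b \<noteq> 0 \<Longrightarrow> min (v a) (v b) \<le> v (a+b)"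
  using dv unfolding discrete_valuation_def by blast

lemma vunif: "\<exists>p. p \<noteq> 0 \<and> v p = 1"
  using dv unfolding discrete_valuation_def by blast

lemma v1[simp]: "v 1 = 0" using vmult[of 1 1] by simp

lemma vneg1[simp]: "v (-1) = 0" using vmult[of "-1" "-1"] by simp

lemma vneg[simp]: "v (-a) = v a"
proof (cases "a = 0")
  case False
  then show ?thesis using vmult[of "-1" a] by simp
qed simp

lemma vinv: "a \<noteq> 0 \<Longrightarrow> v (inverse a) = - v a"
  using vmult[of a "inverse a"] by simp

lemma vdiv: "a \<noteq> 0 \<Longrightarrow> b \<noteq> 0 \<Longrightarrow> v (a/b) = v a - v b"
  by (simp add: divide_inverse vmult vinv)

lemma vpow: "a \<noteq> 0 \<Longrightarrow> v (a^n) = int n * v a"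
  by (induction n) (auto simp: vmult algebra_simps)

lemma vge_iff: "a \<noteq> 0 \<Longrightarrow> vge v n a \<longleftrightarrow> n \<le> v a"
  by (simp add: vge_def)

lemma vge0[simp]: "vge v n 0" by (simp add: vge_def)

lemma vge_add: "vge v n a \<Longrightarrow> vge v n b \<Longrightarrow> vge v n (a + b)"
  unfolding vge_def
proof -
  assume a: "a = 0 \<or> n \<le> v a" and b: "b = 0 \<or> n \<le> v b"
  show "a + b = 0 \<or> n \<le> v (a + b)"
  proof (cases "a = 0 \<or> b = 0 \<or> a + b = 0")
    case True then show ?thesis using a b by auto
  next
    case False
    then show ?thesis using vadd[of a b] a b by linarith
  qed
qed

lemma vge_neg[simp]: "vge v n (-a) \<longleftrightarrow> vge v n a"
  by (simp add: vge_def)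

lemma vge_diff: "vge v n a \<Longrightarrow> vge v n b \<Longrightarrow> vge v n (a - b)"
  using vge_add[of n a "-b"] by simp

lemma vge_mono: "vge v n a \<Longrightarrow> m \<le> n \<Longrightarrow> vge v m a"
  by (auto simp: vge_def)

lemma vge_self: "vge v (v a) a" by (simp add: vge_def)

lemma vge_mult: "vge v n a \<Longrightarrow> vge v m b \<Longrightarrow> vge v (n+m) (a*b)"
  unfolding vge_def by (metis add_mono mult_eq_0_iff vmult)

lemma vge_multv: "vge v n a \<Longrightarrow> vge v (n + v b) (a*b)"
  using vge_mult[of n a "v b" b] by (simp add: vge_self)

lemma vge_multv': "vge v n a \<Longrightarrow> vge v (v b + n) (b*a)"
  using vge_mult[of "v b" b n a] by (simp add: vge_self)

lemma vge_div: "vge v n a \<Longrightarrow> b \<noteq> 0 \<Longrightarrow> vge v (n - v b) (a / b)"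
  by (cases "a = 0") (auto simp: vge_def vdiv)


lemma vdom: assumes "a \<noteq> 0" "vge v (v a + 1) c"
  shows "a + c \<noteq> 0 \<and> v (a + c) = v a"
proof (cases "c = 0")
  case True then show ?thesis using assms by simp
next
  case False
  then have vc: "v c > v a" using assms by (simp add: vge_def)
  have ne: "a + c \<noteq> 0"
  proof
    assume "a + c = 0" then have "c = -a" by (metis add.commute eq_neg_iff_add_eq_0)
    then show False using vc by simp
  qed
  have 1: "min (v a) (v c) \<le> v (a + c)" using vadd[OF assms(1) False ne] .
  have 2: "min (v (a + c)) (v (-c)) \<le> v a"
    using vadd[of "a + c" "-c"] ne False assms(1) by simp
  show ?thesis using 1 2 vc ne by simp
qed

lemma vdom': assumes "a \<noteq> 0" "vge v (v a + 1) c"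
  shows "c + a \<noteq> 0 \<and> v (c + a) = v a"
  using vdom[OF assms] by (simp add: add.commute)

lemma vmin_ne: assumes "a \<noteq> 0" "b \<noteq> 0" "v a \<noteq> v b"
  shows "a + b \<noteq> 0 \<and> v (a+b) = min (v a) (v b)"
proof (cases "v a < v b")
  case True
  then have "vge v (v a + 1) b" using assms by (simp add: vge_def)
  then show ?thesis using vdom[OF assms(1)] True by simp
next
  case False
  then have "vge v (v b + 1) a" using assms by (simp add: vge_def)
  then show ?thesis using vdom'[OF assms(2)] False by simp
qed

lemma vge_nat: "vge v 0 (of_nat n)"
proof (induction n)
  case (Suc n)
  have "vge v 0 (1::'a)" by (simp add: vge_def)
  then show ?case using vge_add[OF Suc] by (simp add: add.commute)
qed simp

end

lemma subfield_0: "subfield F \<Longrightarrow> 0 \<in> F" by (simp add: subfield_def)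
lemma subfield_1: "subfield F \<Longrightarrow> 1 \<in> F" by (simp add: subfield_def)
lemma subfield_add: "subfield F \<Longrightarrow> a \<in> F \<Longrightarrow> b \<in> F \<Longrightarrow> a + b \<in> F" by (simp add: subfield_def)
lemma subfield_mult: "subfield F \<Longrightarrow> a \<in> F \<Longrightarrow> b \<in> F \<Longrightarrow> a * b \<in> F" by (simp add: subfield_def)
lemma subfield_neg: "subfield F \<Longrightarrow> a \<in> F \<Longrightarrow> - a \<in> F" by (simp add: subfield_def)
lemma subfield_inv: "subfield F \<Longrightarrow> a \<in> F \<Longrightarrow> inverse a \<in> F" by (simp add: subfield_def)
lemma subfield_diff: "subfield F \<Longrightarrow> a \<in> F \<Longrightarrow> b \<in> F \<Longrightarrow> a - b \<in> F"
  using subfield_add[of F a "-b"] subfield_neg[of F b] by simp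
lemma subfield_div: "subfield F \<Longrightarrow> a \<in> F \<Longrightarrow> b \<in> F \<Longrightarrow> a / b \<in> F"
  by (simp add: divide_inverse subfield_mult subfield_inv)
lemma subfield_pow: "subfield F \<Longrightarrow> a \<in> F \<Longrightarrow> a ^ n \<in> F"
  by (induction n) (auto simp: subfield_1 subfield_mult)
lemma subfield_nat: "subfield F \<Longrightarrow> (of_nat n :: 'a::field) \<in> F"
  by (induction n) (auto simp: subfield_0 subfield_1 subfield_add add.commute)
lemma subfield_2: "subfield F \<Longrightarrow> (2 :: 'a::field) \<in> F"
  using subfield_nat[of F 2] by simp
lemma subfield_4: "subfield F \<Longrightarrow> (4 :: 'a::field) \<in> F"
  using subfield_nat[of F 4] by simp

lemma subfield_UNIV: "subfield (UNIV :: 'a::field set)" by (simp add: subfield_def)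

lemma gen_field_sub: "subfield (gen_field F S)"
  unfolding gen_field_def subfield_def by blast

lemma gen_field_F: "F \<subseteq> gen_field F S" unfolding gen_field_def by blast
lemma gen_field_S: "S \<subseteq> gen_field F S" unfolding gen_field_def by blast
lemma gen_field_least: "subfield E \<Longrightarrow> F \<subseteq> E \<Longrightarrow> S \<subseteq> E \<Longrightarrow> gen_field F S \<subseteq> E"
  unfolding gen_field_def by blast

definition W2 :: "'a::field set \<Rightarrow> 'a \<Rightarrow> 'a set" where
  "W2 F w = {a + c * w | a c. a \<in> F \<and> c \<in> F}"

lemma W2_intro: "a \<in> F \<Longrightarrow> c \<in> F \<Longrightarrow> a + c * w \<in> W2 F w"
  unfolding W2_def by blast

lemma W2_F: "subfield F \<Longrightarrow> F \<subseteq> W2 F w"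
  unfolding W2_def by (force intro: subfield_0)

lemma W2_w: "subfield F \<Longrightarrow> w \<in> W2 F w"
  unfolding W2_def by (force intro: subfield_0 subfield_1)

lemma W2_sub:
  assumes F: "subfield F" and ww: "w * w \<in> F"
  shows "subfield (W2 F w)"
proof -
  have add: "p + r \<in> W2 F w" if hp: "p \<in> W2 F w" and hr: "r \<in> W2 F w" for p r
  proof -
    obtain a c where p: "p = a + c * w" "a \<in> F" "c \<in> F" using hp unfolding W2_def by blast
    obtain a' c' where r: "r = a' + c' * w" "a' \<in> F" "c' \<in> F" using hr unfolding W2_def by blast
    have "p + r = (a + a') + (c + c') * w" using p r by (simp add: algebra_simps)
    moreover have "(a + a') + (c + c') * w \<in> W2 F w"
      by (rule W2_intro[OF subfield_add[OF F p(2) r(2)] subfield_add[OF F p(3) r(3)]])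
    ultimately show ?thesis by simp
  qed
  have mult: "p * r \<in> W2 F w" if hp: "p \<in> W2 F w" and hr: "r \<in> W2 F w" for p r
  proof -
    obtain a c where p: "p = a + c * w" "a \<in> F" "c \<in> F" using hp unfolding W2_def by blast
    obtain a' c' where r: "r = a' + c' * w" "a' \<in> F" "c' \<in> F" using hr unfolding W2_def by blast
    have "p * r = (a * a' + c * c' * (w * w)) + (a * c' + c * a') * w" using p r by (simp add: algebra_simps)
    moreover have "a * a' + c * c' * (w * w) \<in> F" using p r F ww by (blast intro: subfield_add subfield_mult)
    moreover have "a * c' + c * a' \<in> F" using p r F by (blast intro: subfield_add subfield_mult)
    ultimately show ?thesis by (simp add: W2_intro)
  qed
  have neg: "- p \<in> W2 F w" if hp: "p \<in> W2 F w" for p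
  proof -
    obtain a c where p: "p = a + c * w" "a \<in> F" "c \<in> F" using hp unfolding W2_def by blast
    have "- p = (-a) + (-c) * w" using p by simp
    moreover have "(-a) + (-c) * w \<in> W2 F w"
      by (rule W2_intro[OF subfield_neg[OF F p(2)] subfield_neg[OF F p(3)]])
    ultimately show ?thesis by simp
  qed
  have inv: "inverse p \<in> W2 F w" if hp: "p \<in> W2 F w" for p
  proof -
    obtain a c where p: "p = a + c * w" "a \<in> F" "c \<in> F" using hp unfolding W2_def by blast
    define D where "D = a * a - c * c * (w * w)"
    have DF: "D \<in> F" unfolding D_def using p F ww by (blast intro: subfield_diff subfield_mult)
    have Dp: "D = p * (a - c * w)" unfolding D_def p by (simp add: algebra_simps)
    show ?thesis
    proof (cases "D = 0")
      case False
      then have pne: "p \<noteq> 0" using Dp by auto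
      have "inverse p = (a - c * w) / D" using Dp pne False by (simp add: field_simps)
      also have "\<dots> = a / D + (- c / D) * w" by (simp add: diff_divide_distrib)
      moreover have "a / D + (- c / D) * w \<in> W2 F w"
        by (rule W2_intro[OF subfield_div[OF F p(2) DF] subfield_div[OF F subfield_neg[OF F p(3)] DF]])
      ultimately show ?thesis by simp
    next
      case True
      show ?thesis
      proof (cases "c = 0")
        case True
        then have "a = 0" using \<open>D = 0\<close> unfolding D_def by simp
        then have "inverse p = 0 + 0 * w" using p True by simp
        moreover have "0 + 0 * w \<in> W2 F w" by (rule W2_intro[OF subfield_0[OF F] subfield_0[OF F]])
        ultimately show ?thesis by simp
      next
        case False
        have "(w - a / c) * (w + a / c) = w * w - (a * a) / (c * c)" using False by (simp add: field_simps)
        also have "(a * a) / (c * c) = w * w" using \<open>D = 0\<close> False unfolding D_def by (simp add: field_simps)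
        finally have "(w - a / c) * (w + a / c) = 0" by simp
        then have "w = a / c \<or> w = - (a / c)" by (metis add_eq_0_iff2 eq_iff_diff_eq_0 mult_eq_0_iff)
        moreover have "a + c * (a / c) \<in> F"
          by (rule subfield_add[OF F p(2) subfield_mult[OF F p(3) subfield_div[OF F p(2) p(3)]]])
        moreover have "a + c * (- (a / c)) \<in> F"
          by (rule subfield_add[OF F p(2) subfield_mult[OF F p(3) subfield_neg[OF F subfield_div[OF F p(2) p(3)]]]])
        ultimately have "p \<in> F" using p by auto
        then have "inverse p \<in> F" by (rule subfield_inv[OF F])
        then show ?thesis using W2_F[OF F] by blast
      qed
    qed
  qed
  have z: "0 \<in> W2 F w" and o: "1 \<in> W2 F w" using W2_F[OF F] subfield_0[OF F] subfield_1[OF F] by auto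
  show ?thesis unfolding subfield_def
    by (intro conjI ballI z o add mult neg inv)
qed

lemma W2_mem: "p \<in> W2 F w \<Longrightarrow> \<exists>a c. a \<in> F \<and> c \<in> F \<and> p = a + c * w"
  unfolding W2_def by blast

context dval begin

lemma no3:
  assumes F: "subfield F" and Fd: "\<forall>f\<in>F. f \<noteq> 0 \<longrightarrow> n dvd v f"
    and e1: "e1 \<in> W2 F w" and e2: "e2 \<in> W2 F w" and ne1: "e1 \<noteq> 0" and ne2: "e2 \<noteq> 0"
    and d1: "\<not> n dvd v e1" and d2: "\<not> n dvd v e2" and d12: "\<not> n dvd (v e1 - v e2)"
  shows False
proof -
  obtain a1 c1 where 1: "a1 \<in> F" "c1 \<in> F" "e1 = a1 + c1 * w" using W2_mem[OF e1] by blast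
  obtain a2 c2 where 2: "a2 \<in> F" "c2 \<in> F" "e2 = a2 + c2 * w" using W2_mem[OF e2] by blast
  have c1: "c1 \<noteq> 0"
  proof
    assume "c1 = 0" then have "e1 \<in> F" using 1 by simp
    then show False using Fd ne1 d1 by blast
  qed
  define f0 where "f0 = c1 * a2 - c2 * a1"
  have f0F: "f0 \<in> F" unfolding f0_def using 1 2 F by (simp add: subfield_diff subfield_mult)
  have eq: "c1 * e2 = c2 * e1 + f0" unfolding f0_def 1 2 by (simp add: algebra_simps)
  have vc1e2: "v (c1 * e2) = v c1 + v e2" using c1 ne2 by (simp add: vmult)
  have dc1: "n dvd v c1" using Fd 1 c1 by blast
  show False
  proof (cases "c2 = 0")
    case True
    then have "c1 * e2 \<in> F" using eq f0F by simp
    moreover have "c1 * e2 \<noteq> 0" using c1 ne2 by simp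
    ultimately have "n dvd v (c1 * e2)" using Fd by blast
    then show False using vc1e2 dc1 d2 by (metis dvd_add_right_iff)
  next
    case False
    have dc2: "n dvd v c2" using Fd 2 False by blast
    have vc2e1: "v (c2 * e1) = v c2 + v e1" using False ne1 by (simp add: vmult)
    show False
    proof (cases "f0 = 0")
      case True
      then have "v (c1 * e2) = v (c2 * e1)" using eq by simp
      then have "v e1 - v e2 = v c1 - v c2" using vc1e2 vc2e1 by simp
      then show False using d12 dc1 dc2 by (metis dvd_diff)
    next
      case False
      have df0: "n dvd v f0" using Fd f0F False by blast
      have ne: "v (c2 * e1) \<noteq> v f0"
      proof
        assume "v (c2 * e1) = v f0"
        then have "n dvd v c2 + v e1" using df0 vc2e1 by simp
        then show False using dc2 d1 by (metis dvd_add_right_iff)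
      qed
      have "c2 * e1 \<noteq> 0" using \<open>c2 \<noteq> 0\<close> ne1 by simp
      from vmin_ne[OF this False ne] have "v (c1 * e2) = min (v (c2 * e1)) (v f0)" using eq by simp
      then have "v (c1 * e2) = v (c2 * e1) \<or> v (c1 * e2) = v f0" by linarith
      then show False
      proof
        assume "v (c1 * e2) = v (c2 * e1)"
        then have "v e1 - v e2 = v c1 - v c2" using vc1e2 vc2e1 by simp
        then show False using d12 dc1 dc2 by (metis dvd_diff)
      next
        assume "v (c1 * e2) = v f0"
        then have "n dvd v c1 + v e2" using df0 vc1e2 by simp
        then show False using dc1 d2 by (metis dvd_add_right_iff)
      qed
    qed
  qed
qed

lemma resrep:
  assumes F: "subfield F" and Fd: "\<forall>f\<in>F. f \<noteq> 0 \<longrightarrow> n dvd v f"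
    and e: "e \<in> W2 F w" and ne: "e \<noteq> 0" and de: "\<not> n dvd v e"
    and u: "u \<in> W2 F w" and nu: "u \<noteq> 0" and vu: "v u = 0"
  shows "\<exists>f\<in>F. vge v 1 (u - f)"
proof -
  obtain a1 c1 where 1: "a1 \<in> F" "c1 \<in> F" "u = a1 + c1 * w" using W2_mem[OF u] by blast
  obtain a2 c2 where 2: "a2 \<in> F" "c2 \<in> F" "e = a2 + c2 * w" using W2_mem[OF e] by blast
  show ?thesis
  proof (cases "c1 = 0")
    case True
    then have "u \<in> F" using 1 by simp
    then show ?thesis by (intro bexI[of _ u]) auto
  next
    case c1: False
    define f0 where "f0 = c1 * a2 - c2 * a1"
    have f0F: "f0 \<in> F" unfolding f0_def using 1 2 F by (simp add: subfield_diff subfield_mult)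
    have eq: "c1 * e = c2 * u + f0" unfolding f0_def 1 2 by (simp add: algebra_simps)
    have vc1e: "v (c1 * e) = v c1 + v e" using c1 ne by (simp add: vmult)
    have dc1: "n dvd v c1" using Fd 1 c1 by blast
    have nd: "\<not> n dvd v (c1 * e)" using vc1e dc1 de by (metis dvd_add_right_iff)
    have c1e: "c1 * e \<noteq> 0" using c1 ne by simp
    show ?thesis
    proof (cases "c2 = 0")
      case True
      then have "c1 * e \<in> F" using eq f0F by simp
      then show ?thesis using Fd nd c1e by blast
    next
      case c2: False
      have dc2: "n dvd v c2" using Fd 2 c2 by blast
      have vc2u: "v (c2 * u) = v c2" using c2 nu vu by (simp add: vmult)
      have c2u: "c2 * u \<noteq> 0" using c2 nu by simp
      show ?thesis
      proof (cases "f0 = 0")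
        case True
        then have "v (c1 * e) = v c2" using eq vc2u by simp
        then show ?thesis using nd dc2 by simp
      next
        case f0: False
        have df0: "n dvd v f0" using Fd f0F f0 by blast
        have eqv: "v (c2 * u) = v f0"
        proof (rule ccontr)
          assume "v (c2 * u) \<noteq> v f0"
          from vmin_ne[OF c2u f0 this] have "v (c1 * e) = min (v (c2 * u)) (v f0)" using eq by simp
          then have "v (c1 * e) = v c2 \<or> v (c1 * e) = v f0" using vc2u by linarith
          then show False using nd dc2 df0 by auto
        qed
        have "min (v (c2 * u)) (v f0) \<le> v (c1 * e)" using vadd[OF c2u f0] eq c1e by simp
        moreover have "v (c1 * e) \<noteq> v c2" using nd dc2 by auto
        ultimately have gt: "v (c1 * e) > v c2" using eqv vc2u by simp
        have "u - (- f0 / c2) = (c1 * e) / c2" using eq c2 by (simp add: field_simps)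
        moreover have "v ((c1 * e) / c2) = v (c1 * e) - v c2" using c1e c2 by (simp add: vdiv)
        ultimately have "vge v 1 (u - (- f0 / c2))" using gt by (simp add: vge_def)
        moreover have "- f0 / c2 \<in> F" using F f0F 2 by (simp add: subfield_div subfield_neg)
        ultimately show ?thesis by blast
      qed
    qed
  qed
qed

end

locale lsetup = dval v for v :: "'a::field_char_0 \<Rightarrow> int" +
  fixes K T L :: "'a set" and b :: int and q :: nat and bt om mu lam x y Y :: 'a
  assumes resfin: "finite_residue v" and res2: "0 < v 2"
    and K_sub: "subfield K"
    and gal4: "card (galois_group K) = 4"
    and totram: "v ` (K - {0}) = {4 * n | n. True}"
    and break: "\<forall>s\<in>galois_group K. s \<noteq> id \<longrightarrow> (\<forall>p. p \<noteq> 0 \<longrightarrow> v p = 1 \<longrightarrow> v (s p - p) = b + 1)"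
    and T_def: "max_unram_sub v K T"
    and q_def: "q = residue_card v K"
    and btK: "bt \<in> K" and bt0: "bt \<noteq> 0" and vbt: "v bt = 2 * v 2 - 4 * b"
    and omT: "om \<in> T" and omO: "vge v 0 om" and omroot: "om ^ (q - 1) = 1" and om1: "om \<noteq> 1"
    and muK: "mu \<in> K" and muv: "mu = 0 \<or> (0 < v mu \<and> v mu < 2 * b)"
    and lamT: "lam \<in> T" and lamO: "vge v 0 lam"
    and x_eq: "x ^ 2 = 1 + bt"
    and y_eq: "y ^ 2 = (1 + (om + mu) ^ 2 * bt) * (1 + 4 * lam)"
    and M_gen: "gen_field K {x, y} = UNIV"
    and L_def: "L = gen_field K {x}"
    and Y_def: "y * Y = 1 + (om + mu) * (x - 1)"
begin

abbreviation "E \<equiv> v 2"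
abbreviation "om' \<equiv> om + mu"

lemma TK: "T \<subseteq> K" using T_def unfolding max_unram_sub_def by blast
lemma omK: "om \<in> K" using TK omT by blast
lemma lamK: "lam \<in> K" using TK lamT by blast
lemma om'K: "om' \<in> K" using omK muK K_sub by (simp add: subfield_add)

lemma Kdvd: "k \<in> K \<Longrightarrow> k \<noteq> 0 \<Longrightarrow> 4 dvd v k"
proof -
  assume "k \<in> K" "k \<noteq> 0"
  then have "v k \<in> v ` (K - {0})" by blast
  then show "4 dvd v k" using totram by auto
qed

lemma Kval: "\<exists>k\<in>K. k \<noteq> 0 \<and> v k = 4 * n"
proof -
  have "4 * n \<in> v ` (K - {0})" using totram by auto
  then show ?thesis by auto
qed

lemma Kval': "4 dvd m \<Longrightarrow> \<exists>k\<in>K. k \<noteq> 0 \<and> v k = m"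
  using Kval by (metis dvdE)

lemma two_K: "(2::'a) \<in> K" using K_sub by (rule subfield_2)
lemma E4: "4 dvd E" using Kdvd[OF two_K] by simp
lemma Epos: "E > 0" using res2 .

lemma xxK: "x * x \<in> K"
  using x_eq btK K_sub by (simp add: power2_eq_square subfield_add subfield_1)

lemma yyK: "y * y \<in> K"
proof -
  have "(1 + om' ^ 2 * bt) * (1 + 4 * lam) \<in> K"
    using K_sub om'K btK lamK
    by (simp add: subfield_add subfield_1 subfield_mult subfield_pow subfield_4)
  then show ?thesis using y_eq by (simp add: power2_eq_square)
qed

lemma L_sub: "subfield L" unfolding L_def by (rule gen_field_sub)
lemma KL: "K \<subseteq> L" unfolding L_def by (rule gen_field_F)
lemma xL: "x \<in> L" unfolding L_def using gen_field_S by blast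
lemma LW: "L \<subseteq> W2 K x"
  unfolding L_def by (rule gen_field_least[OF W2_sub[OF K_sub xxK] W2_F[OF K_sub]]) (simp add: W2_w[OF K_sub])
lemma MW: "u \<in> W2 L y"
proof -
  have "subfield (W2 L y)" using W2_sub[OF L_sub] yyK KL by blast
  moreover have "K \<subseteq> W2 L y" using W2_F[OF L_sub] KL by blast
  moreover have "{x, y} \<subseteq> W2 L y" using W2_F[OF L_sub] xL W2_w[OF L_sub] by blast
  ultimately have "gen_field K {x, y} \<subseteq> W2 L y" by (rule gen_field_least)
  then show ?thesis using M_gen by blast
qed

lemma unif: obtains p where "p \<noteq> 0" "v p = 1" using vunif by blast

lemma Leven: "l \<in> L \<Longrightarrow> l \<noteq> 0 \<Longrightarrow> even (v l)"
proof (rule ccontr)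
  assume l: "l \<in> L" "l \<noteq> 0" "odd (v l)"
  have Kd: "\<forall>f\<in>K. f \<noteq> 0 \<longrightarrow> (4::int) dvd v f" using Kdvd by blast
  have ll: "l * l \<in> L" using l L_sub by (simp add: subfield_mult)
  have vll: "v (l * l) = 2 * v l" using l by (simp add: vmult)
  show False
  proof (rule no3[OF K_sub Kd])
    show "l \<in> W2 K x" "l * l \<in> W2 K x" using l ll LW by auto
    show "l \<noteq> 0" "l * l \<noteq> 0" using l by auto
    have o: "odd (v l)" using l by simp
    show "\<not> 4 dvd v l" using o by presburger
    show "\<not> 4 dvd v (l * l)" unfolding vll using o by presburger
    show "\<not> 4 dvd v l - v (l * l)" unfolding vll using o by presburger
  qed
qed

lemma Lnot4: "\<exists>l\<in>L. l \<noteq> 0 \<and> \<not> 4 dvd v l"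
proof (rule ccontr)
  assume "\<not> ?thesis"
  then have Ld: "\<forall>f\<in>L. f \<noteq> 0 \<longrightarrow> (4::int) dvd v f" by blast
  obtain p where p: "p \<noteq> 0" "v p = 1" using unif by blast
  have vpp: "v (p * p) = 2" using p by (simp add: vmult)
  show False
  proof (rule no3[OF L_sub Ld])
    show "p \<in> W2 L y" "p * p \<in> W2 L y" using MW by auto
    show "p \<noteq> 0" "p * p \<noteq> 0" using p by auto
    show "\<not> 4 dvd v p" "\<not> 4 dvd v (p * p)" "\<not> 4 dvd v p - v (p * p)" using p vpp by auto
  qed
qed

lemma piL: obtains pL where "pL \<in> L" "pL \<noteq> 0" "v pL = 2"
proof -
  obtain l where l: "l \<in> L" "l \<noteq> 0" "\<not> 4 dvd v l" using Lnot4 by blast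
  have "even (v l)" using Leven l by blast
  then have "4 dvd (2 - v l)" using l(3) by presburger
  then obtain k where k: "k \<in> K" "k \<noteq> 0" "v k = 2 - v l" using Kval' by blast
  have "l * k \<in> L" using l k KL L_sub by (auto simp: subfield_mult)
  moreover have "l * k \<noteq> 0" "v (l * k) = 2" using l k by (auto simp: vmult)
  ultimately show ?thesis using that by blast
qed

lemma Lval: "even n \<Longrightarrow> \<exists>l\<in>L. l \<noteq> 0 \<and> v l = n"
proof -
  assume "even n"
  then obtain j where j: "n = 2 * j" by (rule evenE)
  obtain pL where p: "pL \<in> L" "pL \<noteq> 0" "v pL = 2" using piL by blast
  show ?thesis
  proof (cases "j \<ge> 0")
    case True
    have "pL ^ nat j \<in> L" using p L_sub by (simp add: subfield_pow)
    moreover have "v (pL ^ nat j) = int (nat j) * v pL" using p by (simp add: vpow)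
    then have "v (pL ^ nat j) = n" using p True j by simp
    moreover have "pL ^ nat j \<noteq> 0" using p by simp
    ultimately show ?thesis by blast
  next
    case False
    have "inverse (pL ^ nat (-j)) \<in> L" using p L_sub by (simp add: subfield_pow subfield_inv)
    moreover have "v (inverse (pL ^ nat (-j))) = - (int (nat (-j)) * v pL)" using p by (simp add: vpow vinv)
    then have "v (inverse (pL ^ nat (-j))) = n" using p False j by simp
    moreover have "inverse (pL ^ nat (-j)) \<noteq> 0" using p by simp
    ultimately show ?thesis by blast
  qed
qed

end

lemma aut_add: "field_aut s \<Longrightarrow> s (a + b) = s a + s b" by (simp add: field_aut_def)
lemma aut_mult: "field_aut s \<Longrightarrow> s (a * b) = s a * s b" by (simp add: field_aut_def)
lemma aut_1: "field_aut s \<Longrightarrow> s 1 = 1" by (simp add: field_aut_def)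
lemma aut_inj: "field_aut s \<Longrightarrow> inj s" by (simp add: field_aut_def bij_def)
lemma aut_0: "field_aut s \<Longrightarrow> s 0 = (0::'a::field)"
proof -
  assume s: "field_aut s"
  have "s 0 + s 0 = s 0 + 0" using aut_add[OF s, of 0 0] by simp
  then show ?thesis by (metis add_left_cancel)
qed
lemma aut_neg: "field_aut s \<Longrightarrow> s (- a) = - s (a::'a::field)"
proof -
  assume s: "field_aut s"
  have "s a + s (-a) = 0" using aut_add[OF s, of a "-a"] aut_0[OF s] by simp
  then show ?thesis by (metis add.commute eq_neg_iff_add_eq_0)
qed
lemma aut_diff: "field_aut s \<Longrightarrow> s (a - b) = s a - s (b::'a::field)"
  using aut_add[of s a "-b"] aut_neg[of s b] by simp
lemma aut_eq0: "field_aut s \<Longrightarrow> s a = 0 \<longleftrightarrow> a = (0::'a::field)"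
  using aut_inj[of s] aut_0[of s] by (metis injD)
lemma aut_inv: "field_aut s \<Longrightarrow> s (inverse a) = inverse (s (a::'a::field))"
proof (cases "a = 0")
  case True
  assume "field_aut s" then show ?thesis using True by (simp add: aut_0)
next
  case False
  assume s: "field_aut s"
  have "s a * s (inverse a) = 1" using aut_mult[OF s, of a "inverse a"] aut_1[OF s] False by simp
  then show ?thesis by (metis inverse_unique)
qed
lemma aut_div: "field_aut s \<Longrightarrow> s (a / b) = s a / s (b::'a::field)"
  by (simp add: divide_inverse aut_mult aut_inv)
lemma aut_pow: "field_aut s \<Longrightarrow> s (a ^ n) = s (a::'a::field) ^ n"
  by (induction n) (auto simp: aut_1 aut_mult)

lemma aut_eq_subfield: "field_aut s1 \<Longrightarrow> field_aut s2 \<Longrightarrow> subfield {a::'a::field. s1 a = s2 a}"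
  unfolding subfield_def by (auto simp: aut_0 aut_1 aut_add aut_mult aut_neg aut_inv)

context lsetup begin

abbreviation "G \<equiv> galois_group K"

lemma G_aut: "s \<in> G \<Longrightarrow> field_aut s" by (simp add: galois_group_def)
lemma G_fix: "s \<in> G \<Longrightarrow> k \<in> K \<Longrightarrow> s k = k" by (simp add: galois_group_def)

lemma sq_sign: assumes s: "s \<in> G" and zz: "z * z \<in> K" shows "s z = z \<or> s z = - z"
proof -
  have "s z * s z = z * z" using aut_mult[OF G_aut[OF s], of z z] G_fix[OF s zz] by simp
  then have "(s z - z) * (s z + z) = 0" by (simp add: algebra_simps)
  then show ?thesis by (auto simp: eq_neg_iff_add_eq_0)
qed

lemma G_agree: assumes "s1 \<in> G" "s2 \<in> G" "s1 x = s2 x" "s1 y = s2 y" shows "s1 = s2"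
proof -
  have sf: "subfield {a. s1 a = s2 a}" using aut_eq_subfield G_aut assms(1,2) by blast
  have "K \<subseteq> {a. s1 a = s2 a}" using G_fix[OF assms(1)] G_fix[OF assms(2)] by auto
  moreover have "{x, y} \<subseteq> {a. s1 a = s2 a}" using assms(3,4) by auto
  ultimately have "gen_field K {x, y} \<subseteq> {a. s1 a = s2 a}" using gen_field_least[OF sf] by blast
  then show ?thesis using M_gen by auto
qed

lemma y0: "y \<noteq> 0"
proof
  assume y: "y = 0"
  obtain p where p: "p \<noteq> 0" "v p = 1" using unif by blast
  obtain a c where "a \<in> L" "c \<in> L" "p = a + c * y" using W2_mem[OF MW] by blast
  then have "p \<in> L" using y by simp
  then show False using Leven p by fastforce
qed

lemma h_exists: obtains h where "h \<in> G" "h x = x" "h y = - y"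
proof -
  define phi where "phi s = (s x = x, s y = y)" for s :: "'a \<Rightarrow> 'a"
  have inj: "inj_on phi G"
  proof (rule inj_onI)
    fix s1 s2 assume s: "s1 \<in> G" "s2 \<in> G" "phi s1 = phi s2"
    have "s1 x = s2 x" using s sq_sign[OF s(1) xxK] sq_sign[OF s(2) xxK] unfolding phi_def by auto
    moreover have "s1 y = s2 y" using s sq_sign[OF s(1) yyK] sq_sign[OF s(2) yyK] unfolding phi_def by auto
    ultimately show "s1 = s2" using G_agree s by blast
  qed
  have fin: "finite G" using gal4 by (metis card.infinite zero_neq_numeral)
  have U: "(UNIV :: (bool \<times> bool) set) = {(True,True),(True,False),(False,True),(False,False)}" by auto
  have "card (phi ` G) = 4" using card_image[OF inj] gal4 by simp
  moreover have "card (UNIV :: (bool \<times> bool) set) = 4" by (subst U) simp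
  ultimately have "phi ` G = UNIV" by (metis card_subset_eq finite_UNIV subset_UNIV)
  then obtain h where h: "h \<in> G" "phi h = (True, False)" by (metis UNIV_I imageE)
  then have "h x = x" "h y \<noteq> y" unfolding phi_def by auto
  then have "h y = - y" using sq_sign[OF h(1) yyK] by auto
  then show ?thesis using that h \<open>h x = x\<close> by blast
qed

end

context lsetup begin

lemma resK: assumes u: "u \<noteq> 0" "v u = 0" shows "\<exists>k\<in>K. vge v 1 (u - k)"
proof -
  obtain p where p: "p \<noteq> 0" "v p = 1" using unif by blast
  have Ld: "\<forall>f\<in>L. f \<noteq> 0 \<longrightarrow> (2::int) dvd v f" using Leven by blast
  obtain f where f: "f \<in> L" "vge v 1 (u - f)"
    using resrep[OF L_sub Ld MW p(1) _ MW u] p by auto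
  have "vge v (v u + 1) (- (u - f))" by (subst vge_neg) (simp add: f u)
  from vdom[OF u(1) this] have f0: "f \<noteq> 0" "v f = 0" using u by auto
  have Kd: "\<forall>f\<in>K. f \<noteq> 0 \<longrightarrow> (4::int) dvd v f" using Kdvd by blast
  obtain pL where pL: "pL \<in> L" "pL \<noteq> 0" "v pL = 2" using piL by blast
  obtain k where k: "k \<in> K" "vge v 1 (f - k)"
    using resrep[OF K_sub Kd _ pL(2) _ _ f0] pL f LW by auto
  have "vge v 1 ((u - f) + (f - k))" by (rule vge_add[OF f(2) k(2)])
  moreover have "(u - f) + (f - k) = u - k" by simp
  ultimately show ?thesis using k by metis
qed

context
  fixes s assumes sG: "s \<in> G" and sid: "s \<noteq> id"
begin

lemma s_aut: "field_aut s" using G_aut[OF sG] .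
lemma s_fix: "k \<in> K \<Longrightarrow> s k = k" using G_fix[OF sG] .
lemma s_ne0: "a \<noteq> 0 \<Longrightarrow> s a \<noteq> 0" using aut_eq0[OF s_aut] by simp

lemma brk: "p \<noteq> 0 \<Longrightarrow> v p = 1 \<Longrightarrow> v (s p - p) = b + 1"
  using break sG sid by blast

lemma brk_vge: "p \<noteq> 0 \<Longrightarrow> v p = 1 \<Longrightarrow> vge v (b + 1) (s p - p)"
  using brk by (simp add: vge_def)

lemma vs_unif: assumes p: "p \<noteq> 0" "v p = 1" shows "v (s p) = 1"
proof (cases "s p = p")
  case True then show ?thesis using p by simp
next
  case False
  define w where "w = s p / p"
  have sp: "s p = w * p" unfolding w_def using p by simp
  have w0: "w \<noteq> 0" unfolding w_def using p s_ne0 by simp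
  have w1: "w \<noteq> 1" using False sp by auto
  have "s p - p = (w - 1) * p" using sp by (simp add: algebra_simps)
  then have vw1: "v (w - 1) = b" using brk[OF p] w1 p by (simp add: vmult)
  obtain k where k: "k \<in> K" "k \<noteq> 0" "v k = 4 * 1" using Kval by blast
  define p' where "p' = k / p ^ 3"
  have p'0: "p' \<noteq> 0" unfolding p'_def using k p by simp
  have vp': "v p' = 1" unfolding p'_def using k p by (simp add: vdiv vpow)
  have "s p' = s k / s (p ^ 3)" unfolding p'_def by (rule aut_div[OF s_aut])
  also have "s (p ^ 3) = s p ^ 3" by (rule aut_pow[OF s_aut])
  finally have sp': "s p' = k / (w * p) ^ 3" using s_fix[OF k(1)] sp by simp
  show ?thesis
  proof (cases "w ^ 3 = 1")
    case True
    then have "int 3 * v w = 0" using vpow[OF w0, of 3] by simp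
    then have "v w = 0" by simp
    then show ?thesis using sp w0 p by (simp add: vmult)
  next
    case w3: False
    have fac: "w ^ 3 - 1 = (w - 1) * (w * w + w + 1)" by (simp add: algebra_simps power3_eq_cube)
    have "s p' - p' = k / (w * p) ^ 3 - k / p ^ 3" unfolding sp' unfolding p'_def ..
    also have "\<dots> = - (k * (w ^ 3 - 1)) / (w ^ 3 * p ^ 3)"
      using w0 p by (simp add: power_mult_distrib divide_simps) (simp add: algebra_simps)
    finally have diff: "s p' - p' = - (k * ((w - 1) * (w * w + w + 1))) / (w ^ 3 * p ^ 3)"
      unfolding fac .
    have ww: "w * w + w + 1 \<noteq> 0"
    proof
      assume "w * w + w + 1 = 0"
      then have "w ^ 3 - 1 = 0" unfolding fac by simp
      then show False using w3 by simp
    qed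
    have w10: "w - 1 \<noteq> 0" using w1 by simp
    have "v (s p' - p') = v k + v (w - 1) + v (w * w + w + 1) - (3 * v w + 3 * v p)"
      unfolding diff using k w0 p ww w10 by (simp add: vdiv vmult vpow)
    moreover have "v (s p' - p') = b + 1" using brk[OF p'0 vp'] .
    ultimately have key: "v (w * w + w + 1) = 3 * v w" using k vw1 p by simp
    show ?thesis
    proof (cases "v w = 0")
      case True then show ?thesis using sp w0 p by (simp add: vmult)
    next
      case False
      show ?thesis
      proof (cases "v w < 0")
        case True
        have vww: "v (w * w) = 2 * v w" using w0 by (simp add: vmult)
        have "vge v (v (w * w) + 1) (w + 1)"
        proof -
          have "vge v (v w) w" by (rule vge_self)
          moreover have "vge v (v w) 1" using True by (simp add: vge_def)
          ultimately have "vge v (v w) (w + 1)" by (rule vge_add)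
          then show ?thesis using vww True by (elim vge_mono) simp
        qed
        from vdom[OF _ this] w0 have "v (w * w + (w + 1)) = 2 * v w" using vww by simp
        then show ?thesis using key True by (simp add: add.assoc)
      next
        case False2: False
        then have pos: "v w > 0" using False by simp
        have "vge v (v 1 + 1) (w * w + w)"
        proof -
          have "vge v 1 (w * w)" using pos w0 by (simp add: vge_def vmult)
          moreover have "vge v 1 w" using pos by (simp add: vge_def)
          ultimately show ?thesis by (simp add: vge_add)
        qed
        from vdom[OF _ this] have "v (1 + (w * w + w)) = 0" by simp
        then show ?thesis using key pos by (simp add: algebra_simps)
      qed
    qed
  qed
qed

lemma vs_unit: assumes u: "u \<noteq> 0" "v u = 0" shows "v (s u) = 0"
proof -
  obtain p where p: "p \<noteq> 0" "v p = 1" using unif by blast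
  have "v (s (p * u)) = 1" using vs_unif[of "p * u"] p u by (simp add: vmult)
  then have "v (s p) + v (s u) = 1"
    using aut_mult[OF s_aut] p u s_ne0 by (simp add: vmult)
  then show ?thesis using vs_unif[OF p] by simp
qed

lemma vs: assumes a: "a \<noteq> 0" shows "v (s a) = v a"
proof -
  obtain p where p: "p \<noteq> 0" "v p = 1" using unif by blast
  have vsp: "v (s p) = 1" using vs_unif[OF p] .
  have sp0: "s p \<noteq> 0" using s_ne0 p by simp
  show ?thesis
  proof (cases "v a \<ge> 0")
    case True
    define n where "n = nat (v a)"
    define u where "u = a / p ^ n"
    have u0: "u \<noteq> 0" unfolding u_def using a p by simp
    have vu: "v u = 0" unfolding u_def n_def using a p True by (simp add: vdiv vpow)
    have "a = p ^ n * u" unfolding u_def using p by simp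
    then have "s a = s p ^ n * s u" by (simp add: aut_mult[OF s_aut] aut_pow[OF s_aut])
    then have "v (s a) = int n * 1 + 0" using vs_unit[OF u0 vu] vsp sp0 s_ne0[OF u0] by (simp add: vmult vpow)
    then show ?thesis unfolding n_def using True by simp
  next
    case False
    define n where "n = nat (- v a)"
    define u where "u = a * p ^ n"
    have u0: "u \<noteq> 0" unfolding u_def using a p by simp
    have vu: "v u = 0" unfolding u_def n_def using a p False by (simp add: vmult vpow)
    have "a = u / p ^ n" unfolding u_def using p by simp
    then have "s a = s u / s p ^ n" by (simp add: aut_div[OF s_aut] aut_pow[OF s_aut])
    then have "v (s a) = 0 - int n * 1" using vs_unit[OF u0 vu] vsp sp0 s_ne0[OF u0] by (simp add: vdiv vpow)
    then show ?thesis unfolding n_def using False by simp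
  qed
qed

lemma vge_s: "vge v n a \<Longrightarrow> vge v n (s a)"
  by (cases "a = 0") (auto simp: vge_def vs aut_0[OF s_aut])

lemma weak: assumes t: "vge v 0 t" shows "vge v b (s t - t)"
proof -
  obtain p where p: "p \<noteq> 0" "v p = 1" using unif by blast
  have unit: "vge v b (s u - u)" if u: "u \<noteq> 0" "v u = 0" for u
  proof -
    have "vge v (b + 1) (s (p * u) - p * u)" using brk_vge[of "p * u"] p u by (simp add: vmult)
    moreover have "vge v (b + 1 + v (s u)) ((s p - p) * s u)" using brk_vge[OF p] by (rule vge_multv)
    ultimately have "vge v (b + 1) (s (p * u) - p * u - (s p - p) * s u)"
      using vs_unit[OF u] by (simp add: vge_diff)
    moreover have "s (p * u) - p * u - (s p - p) * s u = p * (s u - u)"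
      by (simp add: aut_mult[OF s_aut] algebra_simps)
    ultimately have "vge v (b + 1) (p * (s u - u))" by simp
    from vge_div[OF this p(1)] show ?thesis using p by simp
  qed
  show ?thesis
  proof (cases "t = 0")
    case True then show ?thesis by (simp add: aut_0[OF s_aut])
  next
    case False
    then have "v t \<ge> 0" using t by (simp add: vge_def)
    show ?thesis
    proof (cases "v t = 0")
      case True then show ?thesis using unit False by blast
    next
      case False2: False
      have "vge v (v 1 + 1) t" using \<open>v t \<ge> 0\<close> False2 False by (simp add: vge_def)
      from vdom[OF _ this] have "1 + t \<noteq> 0" "v (1 + t) = 0" by auto
      from unit[OF this] show ?thesis by (simp add: aut_add[OF s_aut] aut_1[OF s_aut])
    qed
  qed
qed

lemma strong1: assumes t: "vge v 1 t" shows "vge v (b + 1) (s t - t)"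
proof -
  obtain p where p: "p \<noteq> 0" "v p = 1" using unif by blast
  define t' where "t' = t / p"
  have t': "vge v 0 t'" unfolding t'_def using vge_div[OF t p(1)] p by simp
  have sp0: "s p \<noteq> 0" using s_ne0 p by simp
  have "s t' = s t / s p" unfolding t'_def by (rule aut_div[OF s_aut])
  then have "s t - t = (s p - p) * s t' + p * (s t' - t')"
    unfolding t'_def using p sp0 by (simp add: field_simps)
  moreover have "vge v (b + 1 + 0) ((s p - p) * s t')" using brk_vge[OF p] vge_s[OF t'] by (rule vge_mult)
  moreover have "vge v (v p + b) (p * (s t' - t'))" using weak[OF t'] by (rule vge_multv')
  ultimately show ?thesis using p by (simp add: vge_add add.commute)
qed

lemma strong: assumes t: "vge v 0 t" shows "vge v (b + 1) (s t - t)"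
proof (cases "t = 0 \<or> v t \<ge> 1")
  case True
  then have "vge v 1 t" by (auto simp: vge_def)
  then show ?thesis by (rule strong1)
next
  case False
  then have u: "t \<noteq> 0" "v t = 0" using t by (auto simp: vge_def)
  obtain k where k: "k \<in> K" "vge v 1 (t - k)" using resK[OF u] by blast
  have eq: "s t - t = s (t - k) - (t - k)" using s_fix[OF k(1)] by (simp add: aut_diff[OF s_aut])
  show ?thesis unfolding eq by (rule strong1[OF k(2)])
qed

lemma NF: assumes p: "p \<noteq> 0" "v p = 1" shows "s p \<noteq> p"
proof
  assume sp: "s p = p"
  obtain a where a: "s a \<noteq> a" using sid by (metis eq_id_iff)
  have a0: "a \<noteq> 0" using a aut_0[OF s_aut] by auto
  define N where "N = nat (2 - v a)"
  define t where "t = a * p ^ N"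
  have t0: "t \<noteq> 0" unfolding t_def using a0 p by simp
  have vt: "v t \<ge> 2" unfolding t_def N_def using a0 p by (simp add: vmult vpow)
  define p1 where "p1 = p + t"
  have "vge v (v p + 1) t" using vt t0 p by (simp add: vge_def)
  from vdom[OF p(1) this] have p1: "p1 \<noteq> 0" "v p1 = 1" unfolding p1_def using p by auto
  have "s t = s a * s p ^ N" unfolding t_def by (simp add: aut_mult[OF s_aut] aut_pow[OF s_aut])
  then have "s t = s a * p ^ N" using sp by simp
  moreover have "s p1 = s p + s t" unfolding p1_def by (rule aut_add[OF s_aut])
  ultimately have "s p1 = p + s a * p ^ N" using sp by simp
  then have "s p1 - p1 = (s a - a) * p ^ N"
    unfolding p1_def t_def by (simp add: algebra_simps)
  then have ne: "s p1 - p1 \<noteq> 0" using a p by simp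
  define u1 where "u1 = p1 / p"
  have u1: "vge v 0 u1" unfolding u1_def using p p1 by (simp add: vge_def vdiv)
  have "s u1 = s p1 / s p" unfolding u1_def by (rule aut_div[OF s_aut])
  then have "s u1 = s p1 / p" using sp by simp
  then have "s p1 - p1 = p * (s u1 - u1)"
    unfolding u1_def using p by (simp add: field_simps)
  moreover have "vge v (v p + (b + 1)) (p * (s u1 - u1))" using strong[OF u1] by (rule vge_multv')
  ultimately have "v (s p1 - p1) \<ge> b + 2" using ne p by (simp add: vge_def)
  then show False using brk[OF p1] by simp
qed

lemma b_nonneg: "b \<ge> 0"
proof -
  obtain p where p: "p \<noteq> 0" "v p = 1" using unif by blast
  have ne: "s p - p \<noteq> 0" using NF[OF p] by simp
  have "min (v (s p)) (v (- p)) \<le> v (s p + - p)" using vadd[of "s p" "-p"] s_ne0 p ne by simp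
  then show ?thesis using brk[OF p] vs_unif[OF p] p by simp
qed

definition good where "good a \<longleftrightarrow> vge v (v a + b) (s a - a)"

lemma good_mult: assumes "a \<noteq> 0" "c \<noteq> 0" "good a" "good c" shows "good (a * c)"
proof -
  have "s (a * c) - a * c = (s a - a) * s c + a * (s c - c)" by (simp add: aut_mult[OF s_aut] algebra_simps)
  moreover have "vge v (v a + b + v (s c)) ((s a - a) * s c)" using assms(3) unfolding good_def by (rule vge_multv)
  then have "vge v (v (a * c) + b) ((s a - a) * s c)" using assms vs by (simp add: vmult algebra_simps)
  moreover have "vge v (v a + (v c + b)) (a * (s c - c))" using assms(4) unfolding good_def by (rule vge_multv')
  then have "vge v (v (a * c) + b) (a * (s c - c))" using assms by (simp add: vmult algebra_simps)
  ultimately show ?thesis unfolding good_def by (simp add: vge_add)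
qed

lemma good_inv: assumes "a \<noteq> 0" "good a" shows "good (inverse a)"
proof -
  have sa: "s a \<noteq> 0" using s_ne0 assms by simp
  have "s (inverse a) = inverse (s a)" by (rule aut_inv[OF s_aut])
  then have "s (inverse a) - inverse a = - (s a - a) / (a * s a)"
    using assms sa by (simp add: field_simps)
  moreover have g: "vge v (v a + b) (- (s a - a))" using assms(2) unfolding good_def by (subst vge_neg)
  have "vge v (v a + b - v (a * s a)) (- (s a - a) / (a * s a))"
    using vge_div[OF g, of "a * s a"] assms sa by simp
  ultimately show ?thesis unfolding good_def using assms sa vs by (simp add: vmult vinv)
qed

lemma good_pow: "a \<noteq> 0 \<Longrightarrow> good a \<Longrightarrow> good (a ^ n)"
proof (induction n)
  case 0 then show ?case by (simp add: good_def aut_1[OF s_aut])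
next
  case (Suc n) then show ?case using good_mult[of a "a ^ n"] by simp
qed

lemma L1: assumes a: "a \<noteq> 0" shows "vge v (v a + b) (s a - a)"
proof -
  obtain p where p: "p \<noteq> 0" "v p = 1" using unif by blast
  have gp: "good p" unfolding good_def using brk_vge[OF p] p by (simp add: add.commute)
  have gu: "good u" if "u \<noteq> 0" "v u = 0" for u
    unfolding good_def using strong[of u] that by (auto simp: vge_def)
  show ?thesis
  proof (cases "v a \<ge> 0")
    case True
    define n where "n = nat (v a)"
    define u where "u = a / p ^ n"
    have u0: "u \<noteq> 0" unfolding u_def using a p by simp
    have vu: "v u = 0" unfolding u_def n_def using a p True by (simp add: vdiv vpow)
    have "a = p ^ n * u" unfolding u_def using p by simp
    moreover have "good (p ^ n * u)" using good_mult[OF _ u0 good_pow[OF p(1) gp] gu[OF u0 vu]] p by simp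
    ultimately show ?thesis unfolding good_def by simp
  next
    case False
    define n where "n = nat (- v a)"
    define u where "u = a * p ^ n"
    have u0: "u \<noteq> 0" unfolding u_def using a p by simp
    have vu: "v u = 0" unfolding u_def n_def using a p False by (simp add: vmult vpow)
    have "a = inverse (p ^ n) * u" unfolding u_def using p by simp
    moreover have "good (inverse (p ^ n) * u)"
      using good_mult[OF _ u0 good_inv[OF _ good_pow[OF p(1) gp]] gu[OF u0 vu]] p by simp
    ultimately show ?thesis unfolding good_def by simp
  qed
qed

lemma L2a: assumes a: "a \<noteq> 0" and m: "v a mod 4 = 1"
  shows "s a \<noteq> a \<and> v (s a - a) = v a + b"
proof -
  have "4 dvd (v a - 1)" using m by presburger
  then obtain k where k: "k \<in> K" "k \<noteq> 0" "v k = v a - 1" using Kval' by blast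
  define a' where "a' = a / k"
  have a'0: "a' \<noteq> 0" "v a' = 1" unfolding a'_def using a k by (auto simp: vdiv)
  have d: "s a' - a' = (s a - a) / k" unfolding a'_def using s_fix[OF k(1)] by (simp add: aut_div[OF s_aut] diff_divide_distrib)
  have "s a' \<noteq> a'" using NF[OF a'0] .
  then have ne: "s a \<noteq> a" using d by auto
  have "v (s a' - a') = b + 1" using brk[OF a'0] .
  then have "v (s a - a) - v k = b + 1" using d ne k by (simp add: vdiv)
  then show ?thesis using ne k by simp
qed

lemma L2: assumes a: "a \<noteq> 0" and o: "odd (v a)"
  shows "s a \<noteq> a \<and> v (s a - a) = v a + b"
proof (cases "v a mod 4 = 1")
  case True then show ?thesis using L2a a by blast
next
  case False
  define a' where "a' = inverse a"
  have a'0: "a' \<noteq> 0" unfolding a'_def using a by simp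
  have va': "v a' = - v a" unfolding a'_def using a by (simp add: vinv)
  have "v a' mod 4 = 1" using va' o False by presburger
  from L2a[OF a'0 this] have h: "s a' \<noteq> a'" "v (s a' - a') = v a' + b" by auto
  have sa: "s a \<noteq> 0" using s_ne0 a by simp
  have "s a' = inverse (s a)" unfolding a'_def by (rule aut_inv[OF s_aut])
  then have d: "s a' - a' = - (s a - a) / (a * s a)"
    unfolding a'_def using a sa by (simp add: field_simps)
  have ne: "s a \<noteq> a" using h(1) unfolding a'_def by (auto simp: aut_inv[OF s_aut])
  have sw: "v (a - s a) = v (s a - a)" by (metis minus_diff_eq vneg)
  have "v (s a' - a') = v (s a - a) - (v a + v a)" unfolding d using a sa ne vs sw by (simp add: vdiv vmult)
  then show ?thesis using h(2) va' ne by simp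
qed

end
end

context lsetup begin

definition hh where "hh = (SOME h. h \<in> G \<and> h x = x \<and> h y = - y)"

lemma hh: "hh \<in> G" "hh x = x" "hh y = - y"
proof -
  have "\<exists>h. h \<in> G \<and> h x = x \<and> h y = - y" using h_exists by metis
  from someI_ex[OF this] show "hh \<in> G" "hh x = x" "hh y = - y" unfolding hh_def by auto
qed

lemma hh_id: "hh \<noteq> id"
proof
  assume "hh = id"
  then have "y = - y" using hh(3) by simp
  then show False using y0 by (simp add: eq_neg_iff_add_eq_0)
qed

lemmas hL1 = L1[OF hh(1) hh_id] and hL2 = L2[OF hh(1) hh_id] and hb0 = b_nonneg[OF hh(1) hh_id]

lemma hh_aut: "field_aut hh" using G_aut[OF hh(1)] .

lemma hh_L: "l \<in> L \<Longrightarrow> hh l = l"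
proof -
  have sf: "subfield {a. hh a = a}" using aut_eq_subfield[OF hh_aut, of id] field_aut_def
    by (simp add: field_aut_def bij_id)
  have "K \<subseteq> {a. hh a = a}" using G_fix[OF hh(1)] by auto
  moreover have "{x} \<subseteq> {a. hh a = a}" using hh(2) by auto
  ultimately have "L \<subseteq> {a. hh a = a}" unfolding L_def using gen_field_least[OF sf] by blast
  then show "l \<in> L \<Longrightarrow> hh l = l" by blast
qed

abbreviation "n0 \<equiv> 1 + om' * (x - 1)"

lemma n0L: "n0 \<in> L"
  using L_sub KL om'K xL by (auto simp: subfield_add subfield_mult subfield_diff subfield_1)

lemma hY: "hh Y = - Y"
proof -
  have "hh (y * Y) = y * Y" using Y_def hh_L[OF n0L] by simp
  then have "- y * hh Y = y * Y" using hh(3) aut_mult[OF hh_aut] by simp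
  then show ?thesis using y0 by (metis minus_mult_minus mult_left_cancel)
qed

lemma om'0_or: "om' = 0 \<or> om' \<noteq> 0" by simp

lemma Y0: "Y \<noteq> 0"
proof
  assume Y: "Y = 0"
  then have n: "n0 = 0" using Y_def by simp
  then have om': "om' \<noteq> 0" by auto
  then have "x = 1 - 1 / om'" using n by (simp add: field_simps)
  then have "x \<in> K" using K_sub om'K by (simp add: subfield_diff subfield_div subfield_1)
  then have "L \<subseteq> K" unfolding L_def by (intro gen_field_least[OF K_sub]) auto
  moreover obtain pL where "pL \<in> L" "pL \<noteq> 0" "v pL = 2" using piL by blast
  ultimately show False using Kdvd by fastforce
qed

lemma n0_0: "n0 \<noteq> 0" using Y_def y0 Y0 by (metis mult_eq_0_iff)

lemma YYL: "Y * Y \<in> L"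
proof -
  have "Y * Y = ((y * Y) * (y * Y)) / (y * y)" using y0 by simp
  then have "Y * Y = (n0 * n0) / (y * y)" unfolding Y_def .
  then show ?thesis using n0L yyK KL L_sub by (auto simp: subfield_mult subfield_div)
qed

lemma MWY: "u \<in> W2 L Y"
proof -
  obtain a c where ac: "a \<in> L" "c \<in> L" "u = a + c * y" using W2_mem[OF MW] by blast
  have "y = ((y * Y) / (Y * Y)) * Y" using Y0 by simp
  then have "y = (n0 / (Y * Y)) * Y" unfolding Y_def .
  then have e: "u = a + (c * (n0 / (Y * Y))) * Y" using ac by simp
  have cL: "c * (n0 / (Y * Y)) \<in> L" using ac n0L YYL L_sub by (simp add: subfield_mult subfield_div)
  show ?thesis unfolding e by (rule W2_intro[OF ac(1) cL])
qed

lemma vy_even: "even (v y)"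
proof -
  have "4 dvd v (y * y)" using Kdvd yyK y0 by simp
  then show ?thesis using y0 by (simp add: vmult) presburger
qed

lemma vY_even: "even (v Y)"
proof -
  have "v (y * Y) = v y + v Y" using y0 Y0 by (simp add: vmult)
  then have "v n0 = v y + v Y" unfolding Y_def .
  moreover have "even (v n0)" using Leven n0L n0_0 by blast
  ultimately show ?thesis using vy_even by presburger
qed

lemma kappa: obtains kp where "kp \<in> L" "Y - kp \<noteq> 0" "odd (v (Y - kp))"
proof -
  obtain p where p: "p \<noteq> 0" "v p = 1" using unif by blast
  obtain a c where ac: "a \<in> L" "c \<in> L" "p = a + c * Y" using W2_mem[OF MWY] by blast
  have c0: "c \<noteq> 0"
  proof
    assume "c = 0" then have "p \<in> L" using ac by simp
    then show False using Leven p by fastforce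
  qed
  have "Y - (- a / c) = p / c" using ac c0 by (simp add: field_simps)
  moreover have "v (p / c) = 1 - v c" using p c0 by (simp add: vdiv)
  moreover have "even (v c)" using Leven ac c0 by blast
  moreover have "- a / c \<in> L" using ac L_sub by (simp add: subfield_div subfield_neg)
  ultimately show ?thesis using that p c0 by fastforce
qed

lemma hdiff: "kp \<in> L \<Longrightarrow> hh (Y - kp) - (Y - kp) = - 2 * Y"
  using hY hh_L[of kp] by (simp add: aut_diff[OF hh_aut])

lemma vm2Y: "v (- 2 * Y) = E + v Y" using Y0 by (simp add: vmult)

lemma b_odd: "odd b"
proof -
  obtain kp where kp: "kp \<in> L" "Y - kp \<noteq> 0" "odd (v (Y - kp))" using kappa by blast
  have "v (hh (Y - kp) - (Y - kp)) = v (Y - kp) + b" using hL2[OF kp(2,3)] by blast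
  then have "E + v Y = v (Y - kp) + b" using hdiff[OF kp(1)] vm2Y by simp
  then show ?thesis using E4 vY_even kp(3) by presburger
qed

lemma b_lt_E: "b < E"
proof -
  have d: "hh Y - Y = - 2 * Y" using hY by simp
  have "vge v (v Y + b) (hh Y - Y)" using hL1[OF Y0] .
  then have "v Y + b \<le> E + v Y" unfolding d using Y0 by (simp add: vge_def vmult)
  then have "b \<le> E" by simp
  then show ?thesis using b_odd E4 by (metis dvd_trans even_numeral order.not_eq_order_implies_strict)
qed

lemma b_pos: "b \<ge> 1" using hb0 b_odd by presburger

end

context lsetup begin

lemma q_ge2: "q \<ge> 2"
proof -
  define P where "P n \<longleftrightarrow> (\<exists>R. finite R \<and> card R = n \<and> R \<subseteq> {a\<in>K. vge v 0 a} \<and>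
       (\<forall>a\<in>K. vge v 0 a \<longrightarrow> (\<exists>r\<in>R. vge v 1 (a - r))))" for n
  have qP: "q = (LEAST n. P n)" unfolding q_def residue_card_def P_def ..
  obtain R0 where R0: "finite R0" "\<forall>a. vge v 0 a \<longrightarrow> (\<exists>r\<in>R0. vge v 1 (a - r))"
    using resfin unfolding finite_residue_def by blast
  define Q where "Q r \<longleftrightarrow> (\<exists>a. a \<in> K \<and> vge v 0 a \<and> vge v 1 (a - r))" for r
  define g where "g r = (SOME a. a \<in> K \<and> vge v 0 a \<and> vge v 1 (a - r))" for r
  have g: "g r \<in> K \<and> vge v 0 (g r) \<and> vge v 1 (g r - r)" if "Q r" for r
    using someI_ex[OF that[unfolded Q_def]] unfolding g_def .
  define R where "R = g ` {r \<in> R0. Q r}"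
  have "P (card R)" unfolding P_def
  proof (intro exI conjI)
    show "finite R" unfolding R_def using R0 by simp
    show "R \<subseteq> {a \<in> K. vge v 0 a}" unfolding R_def using g by auto
    show "\<forall>a\<in>K. vge v 0 a \<longrightarrow> (\<exists>r\<in>R. vge v 1 (a - r))"
    proof (intro ballI impI)
      fix a assume a: "a \<in> K" "vge v 0 a"
      obtain r where r: "r \<in> R0" "vge v 1 (a - r)" using R0 a by blast
      have Qr: "Q r" unfolding Q_def using a r by blast
      have "vge v 1 ((a - r) - (g r - r))" using vge_diff[OF r(2)] g[OF Qr] by blast
      then have "vge v 1 (a - g r)" by simp
      moreover have "g r \<in> R" unfolding R_def using r Qr by blast
      ultimately show "\<exists>r\<in>R. vge v 1 (a - r)" by blast
    qed
  qed simp
  then have "P q" unfolding qP by (rule LeastI)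
  then obtain R' where R': "finite R'" "card R' = q"
    "\<forall>a\<in>K. vge v 0 a \<longrightarrow> (\<exists>r\<in>R'. vge v 1 (a - r))" unfolding P_def by blast
  obtain r0 where r0: "r0 \<in> R'" "vge v 1 (0 - r0)" using R'(3) K_sub subfield_0 by (metis vge0)
  obtain r1 where r1: "r1 \<in> R'" "vge v 1 (1 - r1)" using R'(3) K_sub subfield_1
    by (metis vge_iff v1 order_refl one_neq_zero)
  show ?thesis
  proof (rule ccontr)
    assume "\<not> q \<ge> 2"
    then have "card R' \<le> Suc 0" using R' by simp
    then have "r0 = r1" using card_le_Suc0_iff_eq[OF R'(1)] r0 r1 by blast
    then have "vge v 1 ((1 - r1) - (0 - r0))" using vge_diff[OF r1(2) r0(2)] by simp
    then have "vge v 1 (1::'a)" using \<open>r0 = r1\<close> by simp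
    then show False by (simp add: vge_def)
  qed
qed

lemma om_ne0: "om \<noteq> 0"
proof
  assume "om = 0"
  moreover have "q - 1 \<noteq> 0" using q_ge2 by simp
  ultimately have "om ^ (q - 1) = 0" by simp
  then show False using omroot by (metis zero_neq_one)
qed

lemma v_om: "v om = 0"
proof -
  have q1: "q - 1 \<noteq> 0" using q_ge2 by simp
  have "v (om ^ (q - 1)) = int (q - 1) * v om" using vpow[OF om_ne0] .
  then have "int (q - 1) * v om = 0" using omroot by simp
  then show ?thesis using q1 by simp
qed

lemma v_om': "om' \<noteq> 0 \<and> v om' = 0"
proof (cases "mu = 0")
  case True then show ?thesis using v_om om_ne0 by simp
next
  case False
  then have "v mu > 0" using muv by simp
  then have "vge v (v om + 1) mu" using v_om by (simp add: vge_def)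
  from vdom[OF om_ne0 this] show ?thesis using v_om by simp
qed

lemma om'O: "vge v 0 om'" using v_om' by (simp add: vge_def)

end

context lsetup begin

lemma vbt_ne0: "v bt \<noteq> 0" using vbt b_odd E4 by presburger

lemma v4: "v (4::'a) = 2 * E"
proof -
  have e: "(4::'a) = 2 * 2" by simp
  have "v (4::'a) = v ((2::'a) * 2)" by (simp only: e)
  also have "\<dots> = E + E" by (rule vmult) simp_all
  finally show ?thesis by simp
qed

lemma vge_eqI: "vge v n a \<Longrightarrow> n = m \<Longrightarrow> vge v m a" by simp

lemma xx: "x * x = 1 + bt" using x_eq by (simp add: power2_eq_square)
lemma yy: "y * y = (1 + om' ^ 2 * bt) * (1 + 4 * lam)" using y_eq by (simp add: power2_eq_square)

lemma vB: "1 + 4 * lam \<noteq> 0 \<and> v (1 + 4 * lam) = 0"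
proof -
  have "vge v (2 * E + 0) (4 * lam)" using vge_mult[OF vge_self[of 4] lamO] v4 by simp
  then have "vge v (v 1 + 1) (4 * lam)" using Epos by (elim vge_mono) simp
  from vdom[OF _ this] show ?thesis by simp
qed

lemma hh1: "hh 1 = 1" by (rule aut_1[OF hh_aut])

lemma z0: "Y - 1 \<noteq> 0"
proof
  assume "Y - 1 = 0"
  then have "Y = 1" by simp
  then have "1 = - (1::'a)" using hY hh1 by simp
  then show False by simp
qed

lemma vz_le: "v (Y - 1) + b \<le> E + v Y"
proof -
  have "vge v (v (Y - 1) + b) (hh (Y - 1) - (Y - 1))" using hL1[OF z0] .
  moreover have "hh (Y - 1) - (Y - 1) = - 2 * Y" using hdiff[of 1] L_sub by (simp add: subfield_1)
  ultimately show ?thesis using Y0 by (simp add: vge_def vmult)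
qed

lemma num_eq: "(1 + om' * (x - 1)) * (1 + om' * (x - 1)) - y * y
   = 2 * om' * (1 - om') * (x - 1) - 4 * lam * (1 + om' ^ 2 * bt)"
proof -
  have "(1 + om' * (x - 1)) * (1 + om' * (x - 1)) - (1 + om' ^ 2 * bt) * (1 + 4 * lam)
     - (2 * om' * (1 - om') * (x - 1) - 4 * lam * (1 + om' ^ 2 * bt)) = om' ^ 2 * (x * x - (1 + bt))"
    by (simp add: algebra_simps power2_eq_square)
  then show ?thesis using xx yy by simp
qed

lemma vbt_pos: "v bt > 0"
proof (rule ccontr)
  assume "\<not> v bt > 0"
  then have neg: "v bt < 0" using vbt_ne0 by simp
  have "vge v (v bt + 1) (1::'a)" using neg by (simp add: vge_def)
  from vdom'[OF bt0 this] have e1: "1 + bt \<noteq> 0" "v (1 + bt) = v bt" by auto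
  have x0: "x \<noteq> 0" using xx e1 by auto
  have vx: "2 * v x = v bt" using xx e1 x0 by (metis vmult mult_2)
  then have vxneg: "v x < 0" using neg by simp
  have "vge v (v x + 1) (- 1::'a)" using vxneg by (simp add: vge_def)
  from vdom[OF x0 this] have xm1: "x - 1 \<noteq> 0" "v (x - 1) = v x" by auto
  have "v (om' ^ 2 * bt) = v bt" using v_om' bt0 by (simp add: vmult vpow)
  moreover have "om' ^ 2 * bt \<noteq> 0" using v_om' bt0 by simp
  ultimately have "vge v (v (om' ^ 2 * bt) + 1) (1::'a)" using neg by (simp add: vge_def)
  from vdom'[OF _ this] have A: "1 + om' ^ 2 * bt \<noteq> 0" "v (1 + om' ^ 2 * bt) = v bt"
    using \<open>v (om' ^ 2 * bt) = v bt\<close> \<open>om' ^ 2 * bt \<noteq> 0\<close> by auto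
  have vyy: "v (y * y) = v bt" using yy A vB by (simp add: vmult)
  then have vy: "2 * v y = v bt" using y0 by (simp add: vmult)
  have "v (om' * (x - 1)) = v x" using v_om' xm1 by (simp add: vmult)
  moreover have "om' * (x - 1) \<noteq> 0" using v_om' xm1 by simp
  ultimately have "vge v (v (om' * (x - 1)) + 1) (1::'a)" using vxneg by (simp add: vge_def)
  from vdom'[OF \<open>om' * (x - 1) \<noteq> 0\<close> this] have vn0: "v n0 = v x"
    using \<open>v (om' * (x - 1)) = v x\<close> by simp
  have "v (y * Y) = v y + v Y" using y0 Y0 by (simp add: vmult)
  then have vY: "v Y = 0" using Y_def vn0 vx vy by simp
  define num where "num = 2 * om' * (1 - om') * (x - 1) - 4 * lam * (1 + om' ^ 2 * bt)"
  have o1: "vge v 0 (1 - om')" by (rule vge_diff[OF _ om'O]) (simp add: vge_def)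
  have t1: "vge v (E + v x) (2 * om' * (1 - om') * (x - 1))"
    by (rule vge_eqI[OF vge_mult[OF vge_mult[OF vge_mult[OF vge_self[of 2] om'O] o1] vge_self[of "x - 1"]]])
      (simp add: xm1)
  have bE: "b < E" by (rule b_lt_E)
  have t2: "vge v (E + v x) (4 * lam * (1 + om' ^ 2 * bt))"
    by (rule vge_mono[OF vge_mult[OF vge_mult[OF vge_self[of 4] lamO] vge_self[of "1 + om' ^ 2 * bt"]]])
      (use v4 A vx vbt bE in linarith)
  have vnum: "vge v (E + v x) num" unfolding num_def by (rule vge_diff[OF t1 t2])
  have gam: "Y * Y - 1 = num / (y * y)"
  proof -
    have "Y * Y - 1 = ((y * Y) * (y * Y) - y * y) / (y * y)" using y0 by (simp add: field_simps)
    then have "Y * Y - 1 = (n0 * n0 - y * y) / (y * y)" unfolding Y_def .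
    then show ?thesis unfolding num_def using num_eq by simp
  qed
  have yy0: "y * y \<noteq> 0" using y0 by simp
  have vg: "vge v (E + v x - v bt) (Y * Y - 1)" unfolding gam using vge_div[OF vnum yy0] vyy by simp
  define z where "z = Y - 1"
  have zz0: "z \<noteq> 0" unfolding z_def by (rule z0)
  have vzE: "v z + b \<le> E" using vz_le vY unfolding z_def by simp
  have bpos: "b \<ge> 1" by (rule b_pos)
  have "Y * Y - 1 = z * z + 2 * z" unfolding z_def by (simp add: algebra_simps)
  moreover have "vge v (v (z * z) + 1) (2 * z)" using zz0 vzE bpos by (simp add: vge_def vmult)
  ultimately have "v (Y * Y - 1) = 2 * v z" "Y * Y - 1 \<noteq> 0"
    using vdom[of "z * z" "2 * z"] zz0 by (auto simp: vmult)
  then have "E + v x - v bt \<le> 2 * v z" using vg by (simp add: vge_def)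
  then show False using vzE vx vbt neg by linarith
qed

lemma vbt_lt: "v bt < 2 * E" using vbt b_pos by simp

lemma vxm1: "x - 1 \<noteq> 0 \<and> v (x - 1) = E - 2 * b"
proof -
  have x1: "x - 1 \<noteq> 0"
  proof
    assume "x - 1 = 0" then have "x = 1" by simp
    then show False using xx bt0 by simp
  qed
  have prod: "(x - 1) * (x + 1) = bt" using xx by (simp add: algebra_simps)
  have xp: "x + 1 = (x - 1) + 2" by simp
  show ?thesis
  proof (cases "v (x - 1) < E")
    case True
    then have "vge v (v (x - 1) + 1) (2::'a)" by (simp add: vge_def)
    from vdom[OF x1 this] have "(x - 1) + 2 \<noteq> 0 \<and> v ((x - 1) + 2) = v (x - 1)" .
    then have "x + 1 \<noteq> 0 \<and> v (x + 1) = v (x - 1)" unfolding xp[symmetric] .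
    then have "x + 1 \<noteq> 0" "v (x + 1) = v (x - 1)" by auto
    then have "v bt = 2 * v (x - 1)" using prod x1 by (metis vmult mult_2)
    then show ?thesis using x1 vbt by simp
  next
    case False
    then have "vge v E (x - 1)" by (simp add: vge_def)
    moreover have "vge v E (2::'a)" by (simp add: vge_def)
    ultimately have "vge v E (x + 1)" using xp vge_add by metis
    then have "vge v (E + E) bt" using vge_mult[OF \<open>vge v E (x - 1)\<close>] prod by metis
    then show ?thesis using vbt_lt bt0 by (simp add: vge_def)
  qed
qed

lemma vY0: "v Y = 0"
proof -
  have "v (om' ^ 2 * bt) = v bt" using v_om' bt0 by (simp add: vmult vpow)
  then have "vge v (v 1 + 1) (om' ^ 2 * bt)" using vbt_pos by (simp add: vge_def)
  from vdom[OF _ this] have A: "v (1 + om' ^ 2 * bt) = 0" "1 + om' ^ 2 * bt \<noteq> 0" by auto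
  have "v (y * y) = 0" using yy A vB by (simp add: vmult)
  then have vy: "v y = 0" using y0 by (simp add: vmult)
  have "vge v (v 1 + 1) (om' * (x - 1))"
    using v_om' vxm1 vbt_pos vbt by (simp add: vge_def vmult)
  from vdom[OF _ this] have "v n0 = 0" by simp
  moreover have "v (y * Y) = v y + v Y" using y0 Y0 by (simp add: vmult)
  ultimately show ?thesis using Y_def vy by simp
qed

lemma vYm1: "Y - 1 \<noteq> 0 \<and> v (Y - 1) \<le> E - b" using z0 vz_le vY0 by simp

lemma Zfacts: obtains kp where "kp \<in> L" "kp \<noteq> 0" "v kp = 0" "Y - kp \<noteq> 0" "v (Y - kp) = E - b"
  "(Y - kp) * (Y - kp) + 2 * kp * (Y - kp) = Y * Y - kp * kp"
  "Y * Y - kp * kp \<in> L" "Y * Y - kp * kp \<noteq> 0" "v (Y * Y - kp * kp) = 2 * E - 2 * b"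
proof -
  obtain kp where kp: "kp \<in> L" "Y - kp \<noteq> 0" "odd (v (Y - kp))" using kappa by blast
  have "v (hh (Y - kp) - (Y - kp)) = v (Y - kp) + b" using hL2[OF kp(2,3)] by blast
  then have "E + v Y = v (Y - kp) + b" using hdiff[OF kp(1)] vm2Y by simp
  then have vZ: "v (Y - kp) = E - b" using vY0 by simp
  have bE: "b < E" "b \<ge> 1" using b_lt_E b_pos by auto
  have "vge v (v Y + 1) (- (Y - kp))" by (subst vge_neg) (use vZ vY0 bE in \<open>simp add: vge_def\<close>)
  from vdom[OF Y0 this] have k: "kp \<noteq> 0" "v kp = 0" using vY0 by auto
  have eq: "(Y - kp) * (Y - kp) + 2 * kp * (Y - kp) = Y * Y - kp * kp" by (simp add: algebra_simps)
  have GL: "Y * Y - kp * kp \<in> L" using YYL kp L_sub by (simp add: subfield_diff subfield_mult)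
  have "vge v (v ((Y - kp) * (Y - kp)) + 1) (2 * kp * (Y - kp))"
    using vZ k kp bE by (simp add: vge_def vmult)
  from vdom[OF _ this] have "Y * Y - kp * kp \<noteq> 0" "v (Y * Y - kp * kp) = 2 * E - 2 * b"
    using eq kp vZ by (auto simp: vmult)
  then show ?thesis using that kp k vZ eq GL by blast
qed

end

context lsetup begin

lemma Lsqrt: assumes u: "u \<in> L" "u \<noteq> 0" "v u = 0" shows "\<exists>s\<in>L. vge v 1 (u - s * s)"
proof -
  define OL where "OL = {a \<in> L. vge v 0 a}"
  define cs where "cs a = {w. vge v 1 (w - a)}" for a
  define C where "C = cs ` OL"
  define f where "f S = {w. \<exists>a\<in>S. vge v 1 (w - a * a)}" for S
  obtain R0 where R0: "finite R0" "\<forall>a. vge v 0 a \<longrightarrow> (\<exists>r\<in>R0. vge v 1 (a - r))"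
    using resfin unfolding finite_residue_def by blast
  have cs_eq: "cs a = cs c" if "vge v 1 (a - c)" for a c
  proof -
    have "vge v 1 ((w - a) + (a - c))" if "vge v 1 (w - a)" for w using vge_add[OF that \<open>vge v 1 (a - c)\<close>] .
    moreover have "vge v 1 ((w - c) - (a - c))" if "vge v 1 (w - c)" for w using vge_diff[OF that \<open>vge v 1 (a - c)\<close>] .
    ultimately show ?thesis unfolding cs_def by (auto simp: algebra_simps)
  qed
  have self: "a \<in> cs a" for a unfolding cs_def by simp
  have finC: "finite C"
  proof (rule finite_subset)
    show "C \<subseteq> cs ` R0"
    proof
      fix S assume "S \<in> C"
      then obtain a where a: "a \<in> OL" "S = cs a" unfolding C_def by blast
      obtain r where "r \<in> R0" "vge v 1 (a - r)" using R0 a unfolding OL_def by blast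
      then show "S \<in> cs ` R0" using cs_eq a by blast
    qed
    show "finite (cs ` R0)" using R0 by simp
  qed
  have fcs: "f (cs a) = cs (a * a)" if a: "vge v 0 a" for a
  proof
    show "f (cs a) \<subseteq> cs (a * a)"
    proof
      fix w assume "w \<in> f (cs a)"
      then obtain a' where a': "vge v 1 (a' - a)" "vge v 1 (w - a' * a')" unfolding f_def cs_def by blast
      have "vge v 0 (a + (a' - a))" using vge_add[OF a vge_mono[OF a'(1)]] by simp
      then have "vge v 0 (a' + a)" using vge_add[OF _ a] by (simp add: algebra_simps)
      from vge_mult[OF a'(1) this] have "vge v 1 (a' * a' - a * a)" by (simp add: algebra_simps)
      from vge_add[OF a'(2) this] have "vge v 1 (w - a * a)" by simp
      then show "w \<in> cs (a * a)" unfolding cs_def by simp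
    qed
    show "cs (a * a) \<subseteq> f (cs a)"
    proof
      fix w assume "w \<in> cs (a * a)"
      then have "vge v 1 (w - a * a)" unfolding cs_def by simp
      then show "w \<in> f (cs a)" unfolding f_def using self[of a] by blast
    qed
  qed
  have maps: "f ` C \<subseteq> C"
  proof
    fix S assume "S \<in> f ` C"
    then obtain a where a: "a \<in> OL" "S = f (cs a)" unfolding C_def by blast
    then have "S = cs (a * a)" using fcs unfolding OL_def by blast
    moreover have "a * a \<in> OL" using a L_sub vge_mult[of 0 a 0 a] unfolding OL_def by (auto simp: subfield_mult)
    ultimately show "S \<in> C" unfolding C_def by blast
  qed
  have inj: "inj_on f C"
  proof (rule inj_onI)
    fix S1 S2 assume S: "S1 \<in> C" "S2 \<in> C" "f S1 = f S2"
    obtain a where a: "a \<in> OL" "S1 = cs a" using S unfolding C_def by blast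
    obtain c where c: "c \<in> OL" "S2 = cs c" using S unfolding C_def by blast
    have a0: "vge v 0 a" and c0: "vge v 0 c" using a c unfolding OL_def by auto
    have "cs (a * a) = cs (c * c)" using S a c fcs a0 c0 by metis
    then have "a * a \<in> cs (c * c)" using self by blast
    then have sq: "vge v 1 (a * a - c * c)" unfolding cs_def by simp
    have "vge v (E + 0 + 0) (2 * c * (a - c))"
      using vge_mult[OF vge_mult[OF vge_self[of 2] c0] vge_diff[OF a0 c0]] by simp
    then have "vge v 1 (2 * c * (a - c))" using Epos by (elim vge_mono) simp
    from vge_diff[OF sq this] have "vge v 1 ((a - c) * (a - c))" by (simp add: algebra_simps)
    then have "vge v 1 (a - c)" by (cases "a - c = 0") (auto simp: vge_def vmult)
    then show "S1 = S2" using a c cs_eq by simp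
  qed
  have "f ` C = C" using endo_inj_surj[OF finC maps inj] .
  moreover have "cs u \<in> C" unfolding C_def OL_def using u by (auto simp: vge_def)
  ultimately obtain S where S: "S \<in> C" "f S = cs u" by (metis imageE)
  obtain s where s: "s \<in> OL" "S = cs s" using S unfolding C_def by blast
  have "cs (s * s) = cs u" using S s fcs unfolding OL_def by auto
  then have "u \<in> cs (s * s)" using self by blast
  then show ?thesis using s unfolding cs_def OL_def by auto
qed

end

context lsetup begin

definition inS :: "'a \<Rightarrow> 'a \<Rightarrow> bool" where
  "inS c z \<longleftrightarrow> (\<exists>u t. vge v 1 u \<and> vge v 1 t \<and> z = (1 + u) * (1 + u) * (1 + c * t))"

lemma inS_S: "inS c z \<Longrightarrow> z \<in> setmul (squares (one_plus v 1 UNIV)) (one_plus v c UNIV)"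
  unfolding inS_def setmul_def squares_def one_plus_def by fastforce

lemma mul_one_plus_div: "D \<noteq> 0 \<Longrightarrow> D * (1 + X / D) = D + (X::'a)"
  by (simp add: distrib_left)

lemma mul_aux2: "D \<noteq> 0 \<Longrightarrow> D * R * (1 + - B / D) = R * (D - (B::'a))"
  by (simp add: field_simps)

lemma inS_one: "inS c 1" unfolding inS_def by (rule exI[of _ 0], rule exI[of _ 0]) simp

lemma inS_direct: assumes "c \<noteq> 0" "v c < thr" "vge v thr r" shows "inS c (1 + r)"
proof -
  have "vge v (thr - v c) (r / c)" using vge_div[OF assms(3) assms(1)] .
  then have "vge v 1 (r / c)" by (rule vge_mono) (use assms in simp)
  moreover have "1 + r = (1 + 0) * (1 + 0) * (1 + c * (r / c))" using assms by simp
  ultimately show ?thesis unfolding inS_def by (intro exI[of _ 0] exI[of _ "r / c"]) simp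
qed

lemma inS_mult: assumes c: "c \<noteq> 0" "v c < thr" "0 \<le> thr" and rho: "vge v 1 rho" and h: "vge v thr h"
  and z: "inS c z" shows "inS c ((1 + rho) * (1 + rho) * z * (1 + h))"
proof -
  obtain u t where ut: "vge v 1 u" "vge v 1 t" "z = (1 + u) * (1 + u) * (1 + c * t)"
    using z unfolding inS_def by blast
  define u' where "u' = rho + u + rho * u"
  define t' where "t' = t + h / c + t * h"
  have hc: "vge v 1 (h / c)" using vge_div[OF h c(1)] c by (elim vge_mono) simp
  have u': "vge v 1 u'" unfolding u'_def
    using vge_add[OF vge_add[OF rho ut(1)] vge_mono[OF vge_mult[OF rho ut(1)]]] by simp
  have t': "vge v 1 t'" unfolding t'_def
    using vge_add[OF vge_add[OF ut(2) hc] vge_mono[OF vge_mult[OF ut(2) h]]] c by simp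
  have "(1 + rho) * (1 + rho) * z * (1 + h) = (1 + u') * (1 + u') * (1 + c * t')"
    unfolding ut(3) u'_def t'_def using c by (simp add: field_simps)
  then show ?thesis unfolding inS_def using u' t' by blast
qed

lemma unit_sq: assumes uu: "uu \<noteq> 0" "v uu = 0" "vge v 1 (uu - s * s)" shows "s \<noteq> 0 \<and> v s = 0"
proof -
  have "vge v (v uu + 1) (- (uu - s * s))" using assms by (subst vge_neg) simp
  from vdom[OF uu(1) this] have "s * s \<noteq> 0" "v (s * s) = 0" using uu by auto
  then show ?thesis by (auto simp: vmult)
qed

lemma descent:
  fixes c :: 'a and thr m0 :: int
  assumes c0: "c \<noteq> 0" and vc: "v c < thr"
    and cond: "\<forall>m. m0 \<le> m \<longrightarrow> m < thr \<longrightarrow> even m \<longrightarrow> 2 \<le> m \<and> m < 2 * E \<and> 2 * thr \<le> 2 * E + m \<and> thr \<le> m + b"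
  shows "\<forall>r. r \<in> L \<and> vge v m0 r \<and> nat (thr - v r) \<le> n \<longrightarrow> inS c (1 + r)"
proof (induction n)
  case 0
  show ?case
  proof (intro allI impI)
    fix r assume r: "r \<in> L \<and> vge v m0 r \<and> nat (thr - v r) \<le> 0"
    then have "vge v thr r" by (auto simp: vge_def)
    then show "inS c (1 + r)" using inS_direct[OF c0 vc] by blast
  qed
next
  case (Suc n)
  show ?case
  proof (intro allI impI)
    fix r assume r: "r \<in> L \<and> vge v m0 r \<and> nat (thr - v r) \<le> Suc n"
    show "inS c (1 + r)"
    proof (cases "r = 0 \<or> v r \<ge> thr")
      case True
      then have "vge v thr r" by (auto simp: vge_def)
      then show ?thesis using inS_direct[OF c0 vc] by blast
    next
      case False
      then have r0: "r \<noteq> 0" and lt: "v r < thr" by auto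
      define m where "m = v r"
      have rL: "r \<in> L" using r by blast
      have mm0: "m0 \<le> m" using r r0 unfolding m_def by (simp add: vge_def)
      have ev: "even m" unfolding m_def using Leven rL r0 by blast
      have cm: "2 \<le> m" "m < 2 * E" "2 * thr \<le> 2 * E + m" "thr \<le> m + b"
        using cond mm0 lt ev unfolding m_def by auto
      have IH': "inS c (1 + r')" if r': "r' \<in> L" "vge v (m + 1) r'" for r'
      proof (cases "r' = 0")
        case True then show ?thesis using inS_one by simp
      next
        case False
        have g1: "v r' \<ge> m + 1" using r' False by (simp add: vge_def)
        have g2: "thr - v r \<le> int (Suc n)" using r by (simp add: nat_le_iff)
        have "nat (thr - v r') \<le> n" by (subst nat_le_iff) (use g1 g2 in \<open>simp add: m_def\<close>)
        moreover have "vge v m0 r'" using r' mm0 by (elim vge_mono) simp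
        ultimately show ?thesis using Suc.IH r' by blast
      qed
      have stepped: "inS c (1 + r)" if decomp: "1 + r = (1 + rho) * (1 + rho) * (1 + r') * (1 + h)"
        and hyp: "vge v 1 rho" "r' \<in> L" "vge v (m + 1) r'" "vge v thr h" for rho r' h
        using inS_mult[OF c0 vc _ hyp(1) hyp(4) IH'[OF hyp(2,3)]] decomp cm lt unfolding m_def by simp
      show ?thesis
      proof (cases "4 dvd m")
        case True
        have "even (m div 2)" using True by presburger
        then obtain l where l: "l \<in> L" "l \<noteq> 0" "v l = m div 2" using Lval by blast
        have vll: "v (l * l) = m" using l ev by (simp add: vmult)
        define uu where "uu = r / (l * l)"
        have uu: "uu \<in> L" "uu \<noteq> 0" "v uu = 0"
          unfolding uu_def using rL L_sub l r0 vll by (auto simp: subfield_mult subfield_div vdiv m_def)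
        obtain s where s: "s \<in> L" "vge v 1 (uu - s * s)" using Lsqrt[OF uu] by blast
        have s0: "s \<noteq> 0" "v s = 0" using unit_sq[OF uu(2,3) s(2)] by auto
        define a where "a = l * s"
        have aL: "a \<in> L" unfolding a_def using l s L_sub by (simp add: subfield_mult)
        have a0: "a \<noteq> 0" "v a = m div 2" unfolding a_def using l s0 by (auto simp: vmult)
        have va1: "vge v 1 a" using a0 cm by (simp add: vge_def)
        have "vge v (v 1 + 1) a" using va1 by simp
        from vdom[OF _ this] have a1: "1 + a \<noteq> 0" "v (1 + a) = 0" by auto
        define r' where "r' = ((r - a * a) - 2 * a) / ((1 + a) * (1 + a))"
        have r'L: "r' \<in> L" unfolding r'_def using rL aL L_sub
          by (simp add: subfield_mult subfield_div subfield_diff subfield_add subfield_1 subfield_2)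
        have "r - a * a = (l * l) * (uu - s * s)" unfolding uu_def a_def using l by (simp add: field_simps)
        then have t1: "vge v (m + 1) (r - a * a)" using vge_multv'[OF s(2), of "l * l"] vll by simp
        have "vge v (E + m div 2) (2 * a)" using a0 by (simp add: vge_def vmult)
        then have t2: "vge v (m + 1) (2 * a)" using cm ev by (elim vge_mono) presburger
        have "vge v (m + 1) ((r - a * a) - 2 * a)" using vge_diff[OF t1 t2] .
        then have "vge v (m + 1 - v ((1 + a) * (1 + a))) (((r - a * a) - 2 * a) / ((1 + a) * (1 + a)))"
          using a1 by (intro vge_div) simp_all
        moreover have vaa: "v ((1 + a) * (1 + a)) = 0" using a1 by (simp add: vmult)
        ultimately have r'v: "vge v (m + 1) r'" unfolding r'_def by (simp only: vaa diff_zero)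
        have aa0: "(1 + a) * (1 + a) \<noteq> 0" using a1 by simp
        have "(1 + a) * (1 + a) * (1 + r') = (1 + a) * (1 + a) + ((r - a * a) - 2 * a)"
          unfolding r'_def by (rule mul_one_plus_div[OF aa0])
        also have "\<dots> = 1 + r" by (simp add: algebra_simps)
        finally have "1 + r = (1 + a) * (1 + a) * (1 + r') * (1 + 0)" by simp
        then show ?thesis by (rule stepped[OF _ va1 r'L r'v vge0])
      next
        case False
        obtain kp where kp: "kp \<in> L" "kp \<noteq> 0" "v kp = 0" "Y - kp \<noteq> 0" "v (Y - kp) = E - b"
          "(Y - kp) * (Y - kp) + 2 * kp * (Y - kp) = Y * Y - kp * kp"
          "Y * Y - kp * kp \<in> L" "Y * Y - kp * kp \<noteq> 0" "v (Y * Y - kp * kp) = 2 * E - 2 * b"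
          using Zfacts by blast
        define Z where "Z = Y - kp"
        define Gm where "Gm = Y * Y - kp * kp"
        have Z: "Z \<noteq> 0" "v Z = E - b" "Z * Z + 2 * kp * Z = Gm" using kp unfolding Z_def Gm_def by auto
        have G: "Gm \<in> L" "Gm \<noteq> 0" "v Gm = 2 * E - 2 * b" using kp unfolding Gm_def by auto
        define n' where "n' = (m - (2 * E - 2 * b)) div 2"
        have n'e: "even n'" "2 * n' = m - (2 * E - 2 * b)"
          unfolding n'_def using False ev E4 b_odd by presburger+
        obtain l where l: "l \<in> L" "l \<noteq> 0" "v l = n'" using Lval n'e(1) by blast
        have vllG: "v (l * l * Gm) = m" using l G n'e by (simp add: vmult)
        have llG: "l * l * Gm \<noteq> 0" "l * l * Gm \<in> L" using l G L_sub by (auto simp: subfield_mult)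
        define uu where "uu = r / (l * l * Gm)"
        have uu: "uu \<in> L" "uu \<noteq> 0" "v uu = 0"
          unfolding uu_def using rL L_sub llG r0 vllG by (auto simp: subfield_div vdiv m_def)
        obtain s where s: "s \<in> L" "vge v 1 (uu - s * s)" using Lsqrt[OF uu] by blast
        have s0: "s \<noteq> 0" "v s = 0" using unit_sq[OF uu(2,3) s(2)] by auto
        define cc where "cc = l * s"
        have ccL: "cc \<in> L" unfolding cc_def using l s L_sub by (simp add: subfield_mult)
        have cc0: "cc \<noteq> 0" "v cc = n'" unfolding cc_def using l s0 by (auto simp: vmult)
        define rho where "rho = cc * Z"
        have rho0: "rho \<noteq> 0" "2 * v rho = m" unfolding rho_def using cc0 Z n'e by (auto simp: vmult)
        have rho1: "vge v 1 rho" using rho0 cm by (simp add: vge_def)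
        have "vge v (v 1 + 1) rho" using rho1 by simp
        from vdom[OF _ this] have rh1: "1 + rho \<noteq> 0" "v (1 + rho) = 0" by auto
        define A where "A = 1 + cc * cc * Gm"
        have AL: "A \<in> L" unfolding A_def using ccL G L_sub by (simp add: subfield_mult subfield_add subfield_1)
        have vccG: "v (cc * cc * Gm) = m" using cc0 G n'e by (simp add: vmult)
        have "vge v (v 1 + 1) (cc * cc * Gm)" using vccG cm by (simp add: vge_def)
        from vdom[OF _ this] have A0: "A \<noteq> 0" "v A = 0" unfolding A_def by auto
        define r' where "r' = (r - cc * cc * Gm) / A"
        have r'L: "r' \<in> L" unfolding r'_def using rL ccL G AL L_sub
          by (simp add: subfield_mult subfield_div subfield_diff)
        have "r - cc * cc * Gm = (l * l * Gm) * (uu - s * s)" unfolding uu_def cc_def using llG by (simp add: field_simps)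
        then have "vge v (m + 1) (r - cc * cc * Gm)" using vge_multv'[OF s(2), of "l * l * Gm"] vllG by simp
        then have r'v: "vge v (m + 1) r'" unfolding r'_def using vge_div[of "m + 1" _ A] A0 by simp
        define B where "B = 2 * cc * Z - 2 * cc * cc * kp * Z"
        have sq: "(1 + rho) * (1 + rho) = A + B"
        proof -
          have "(1 + rho) * (1 + rho) = 1 + 2 * cc * Z + cc * cc * (Z * Z)" unfolding rho_def by (simp add: algebra_simps)
          also have "Z * Z = Gm - 2 * kp * Z" using Z(3) by (simp add: algebra_simps)
          finally show ?thesis unfolding A_def B_def by (simp add: algebra_simps)
        qed
        have b1: "vge v thr (2 * cc * Z)"
        proof -
          have "v (2 * cc * Z) = E + n' + (E - b)" using cc0 Z by (simp add: vmult)
          then show ?thesis using cm n'e cc0 Z by (simp add: vge_def)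
        qed
        have b2: "vge v thr (2 * cc * cc * kp * Z)"
        proof -
          have "v (2 * cc * cc * kp * Z) = E + n' + n' + 0 + (E - b)" using cc0 Z kp by (simp add: vmult)
          then show ?thesis using cm n'e cc0 Z kp by (simp add: vge_def)
        qed
        have Bv: "vge v thr B" unfolding B_def using vge_diff[OF b1 b2] .
        define h where "h = - B / ((1 + rho) * (1 + rho))"
        have hv: "vge v thr h" unfolding h_def using vge_div[of thr "- B" "(1 + rho) * (1 + rho)"] Bv rh1
          by (simp add: vmult)
        have "1 + r = (1 + rho) * (1 + rho) * (1 + r') * (1 + h)"
        proof -
          have "(1 + rho) * (1 + rho) * (1 + r') * (1 + h) = (1 + r') * ((1 + rho) * (1 + rho) - B)"
            unfolding h_def by (rule mul_aux2) (use rh1 in simp)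
          also have "\<dots> = (1 + r') * A" using sq by simp
          also have "\<dots> = 1 + r" unfolding r'_def A_def using A0 unfolding A_def by (simp add: field_simps)
          finally show ?thesis by simp
        qed
        then show ?thesis using stepped[OF _ rho1 r'L r'v hv] by simp
      qed
    qed
  qed
qed

end

context dval begin

lemma op_mult: "a \<in> one_plus v 1 UNIV \<Longrightarrow> c \<in> one_plus v 1 UNIV \<Longrightarrow> a * c \<in> one_plus v 1 UNIV"
proof -
  assume "a \<in> one_plus v 1 UNIV" "c \<in> one_plus v 1 UNIV"
  then obtain s t where st: "a = 1 + s" "vge v 1 s" "c = 1 + t" "vge v 1 t" unfolding one_plus_def by auto
  have "a * c = 1 + 1 * (s + t + s * t)" using st by (simp add: algebra_simps)
  moreover have "vge v 1 (s + t + s * t)"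
    using vge_add[OF vge_add[OF st(2) st(4)] vge_mono[OF vge_mult[OF st(2) st(4)]]] by simp
  ultimately show ?thesis unfolding one_plus_def by blast
qed

lemma lift:
  assumes A: "A \<subseteq> setmul (squares (one_plus v 1 UNIV)) G" and LU: "one_plus v 1 F \<subseteq> one_plus v 1 UNIV"
  shows "setmul (setmul P (squares (one_plus v 1 F))) A \<subseteq> setmul (setmul P (squares (one_plus v 1 UNIV))) G"
proof
  fix z assume "z \<in> setmul (setmul P (squares (one_plus v 1 F))) A"
  then obtain k s w where z: "z = (k * (s * s)) * w" "k \<in> P" "s \<in> one_plus v 1 F" "w \<in> A"
    unfolding setmul_def squares_def by blast
  obtain u g where w: "w = (u * u) * g" "u \<in> one_plus v 1 UNIV" "g \<in> G"
    using A z(4) unfolding setmul_def squares_def by blast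
  have su: "s * u \<in> one_plus v 1 UNIV" using op_mult LU z(3) w(2) by blast
  have "z = (k * ((s * u) * (s * u))) * g" using z w by (simp add: algebra_simps)
  then show "z \<in> setmul (setmul P (squares (one_plus v 1 UNIV))) G"
    unfolding setmul_def squares_def using z(2) su w(3) by blast
qed

lemma op_sub: "one_plus v 1 F \<subseteq> one_plus v 1 UNIV" unfolding one_plus_def by blast

end

context lsetup begin

lemma E_ge4: "E \<ge> 4" by (rule zdvd_imp_le[OF E4 Epos])

lemma part_gen:
  assumes d: "d \<in> L" "d \<noteq> 0" and c: "c \<noteq> 0" "v c < thr"
    and cond: "\<forall>m. v d + 1 \<le> m \<longrightarrow> m < thr \<longrightarrow> even m \<longrightarrow> 2 \<le> m \<and> m < 2 * E \<and> 2 * thr \<le> 2 * E + m \<and> thr \<le> m + b"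
  shows "one_plus v d L \<subseteq> setmul (squares (one_plus v 1 UNIV)) (one_plus v c UNIV)"
proof
  fix z assume "z \<in> one_plus v d L"
  then obtain t where t: "z = 1 + d * t" "t \<in> L" "vge v 1 t" unfolding one_plus_def by blast
  have rL: "d * t \<in> L" using d t L_sub by (simp add: subfield_mult)
  have "vge v (v d + 1) (d * t)" using t(3) by (rule vge_multv')
  then have "inS c (1 + d * t)"
    using descent[OF c cond, of "nat (thr - v (d * t))"] rL by blast
  then show "z \<in> setmul (squares (one_plus v 1 UNIV)) (one_plus v c UNIV)" using t inS_S by simp
qed

lemma part1: assumes bE: "4 * b < E"
  shows "one_plus v ((bt / 2) * (x - 1)) L \<subseteq> setmul (squares (one_plus v 1 UNIV)) (one_plus v ((bt / 2) * (Y - 1)) UNIV)"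
proof (rule part_gen)
  show "(bt / 2) * (x - 1) \<in> L" using btK KL xL L_sub
    by (auto simp: subfield_mult subfield_div subfield_diff subfield_1 subfield_2)
  show "(bt / 2) * (x - 1) \<noteq> 0" using bt0 vxm1 by simp
  show "(bt / 2) * (Y - 1) \<noteq> 0" using bt0 vYm1 by simp
  have vd: "v ((bt / 2) * (x - 1)) = 2 * E - 6 * b" using bt0 vxm1 vbt by (simp add: vmult vdiv)
  have vc: "v ((bt / 2) * (Y - 1)) \<le> 2 * E - 5 * b" using bt0 vYm1 vbt by (simp add: vmult vdiv)
  show "v ((bt / 2) * (Y - 1)) < 2 * E - 5 * b + 1" using vc by simp
  show "\<forall>m. v ((bt / 2) * (x - 1)) + 1 \<le> m \<longrightarrow> m < 2 * E - 5 * b + 1 \<longrightarrow> even m \<longrightarrow>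
      2 \<le> m \<and> m < 2 * E \<and> 2 * (2 * E - 5 * b + 1) \<le> 2 * E + m \<and> 2 * E - 5 * b + 1 \<le> m + b"
  proof (intro allI impI)
    fix m assume m: "v ((bt / 2) * (x - 1)) + 1 \<le> m" "m < 2 * E - 5 * b + 1" "even m"
    have "2 * E - 6 * b + 1 \<le> m" using m(1) vd by simp
    then show "2 \<le> m \<and> m < 2 * E \<and> 2 * (2 * E - 5 * b + 1) \<le> 2 * E + m \<and> 2 * E - 5 * b + 1 \<le> m + b"
      by (intro conjI) (use m(2) bE b_pos E_ge4 in arith)+
  qed
qed

lemma part2:
  shows "one_plus v bt L \<subseteq> setmul (squares (one_plus v 1 UNIV)) (one_plus v ((x - 1) * (Y - 1)) UNIV)"
proof (rule part_gen)
  show "bt \<in> L" using btK KL by auto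
  show "bt \<noteq> 0" by (rule bt0)
  show "(x - 1) * (Y - 1) \<noteq> 0" using vxm1 vYm1 by simp
  have vc: "v ((x - 1) * (Y - 1)) \<le> 2 * E - 3 * b" using vxm1 vYm1 by (simp add: vmult)
  show "v ((x - 1) * (Y - 1)) < 2 * E - 3 * b + 1" using vc by simp
  show "\<forall>m. v bt + 1 \<le> m \<longrightarrow> m < 2 * E - 3 * b + 1 \<longrightarrow> even m \<longrightarrow>
      2 \<le> m \<and> m < 2 * E \<and> 2 * (2 * E - 3 * b + 1) \<le> 2 * E + m \<and> 2 * E - 3 * b + 1 \<le> m + b"
  proof (intro allI impI)
    fix m assume m: "v bt + 1 \<le> m" "m < 2 * E - 3 * b + 1" "even m"
    show "2 \<le> m \<and> m < 2 * E \<and> 2 * (2 * E - 3 * b + 1) \<le> 2 * E + m \<and> 2 * E - 3 * b + 1 \<le> m + b"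
      by (intro conjI) (use m vbt vbt_pos b_pos E_ge4 in arith)+
  qed
qed

lemma all_parts:
  "(4 * b < E \<longrightarrow>
        one_plus v ((bt / 2) * (x - 1)) L
          \<subseteq> setmul (squares (one_plus v 1 UNIV)) (one_plus v ((bt / 2) * (Y - 1)) UNIV))
     \<and> one_plus v bt L
          \<subseteq> setmul (squares (one_plus v 1 UNIV)) (one_plus v ((x - 1) * (Y - 1)) UNIV)
     \<and> (4 * b < E \<longrightarrow>
        setmul (setmul (one_plus v 1 K) (squares (one_plus v 1 L))) (one_plus v ((bt / 2) * (x - 1)) L)
          \<subseteq> setmul (setmul (one_plus v 1 K) (squares (one_plus v 1 UNIV))) (one_plus v ((bt / 2) * (Y - 1)) UNIV))
     \<and> setmul (setmul (one_plus v 1 K) (squares (one_plus v 1 L))) (one_plus v bt L)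
          \<subseteq> setmul (setmul (one_plus v 1 K) (squares (one_plus v 1 UNIV))) (one_plus v ((x - 1) * (Y - 1)) UNIV)"
  using part1 part2 lift[OF part1 op_sub] lift[OF part2 op_sub] by blast

end

theorem lemma3p3:
  fixes v :: "'a::field_char_0 \<Rightarrow> int"
    and K T L :: "'a set"
    and b :: int and q :: nat
    and \<beta> \<omega> \<mu> lam x y Y :: 'a
  assumes val: "discrete_valuation v" and compl: "val_complete v"
    and resfin: "finite_residue v" and res2: "0 < v 2"
    and K_sub: "subfield K"
    and deg: "degree_over K 4"
    and gal4: "card (galois_group K) = 4"
    and galV4: "\<forall>s\<in>galois_group K. s \<circ> s = id"
    and totram: "v ` (K - {0}) = {4 * n | n. True}"
    and break: "\<forall>s\<in>galois_group K. s \<noteq> id \<longrightarrow> (\<forall>p. p \<noteq> 0 \<longrightarrow> v p = 1 \<longrightarrow> v (s p - p) = b + 1)"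
    and T_def: "max_unram_sub v K T"
    and q_def: "q = residue_card v K"
    and \<beta>K: "\<beta> \<in> K" and \<beta>0: "\<beta> \<noteq> 0" and v\<beta>: "v \<beta> = 2 * v 2 - 4 * b"
    and \<omega>T: "\<omega> \<in> T" and \<omega>O: "vge v 0 \<omega>" and \<omega>root: "\<omega> ^ (q - 1) = 1" and \<omega>1: "\<omega> \<noteq> 1"
    and \<mu>K: "\<mu> \<in> K" and \<mu>v: "\<mu> = 0 \<or> (0 < v \<mu> \<and> v \<mu> < 2 * b)"
    and lamT: "lam \<in> T" and lamO: "vge v 0 lam"
    and lamc: "lam = 0 \<or> (lam ^ (q - 1) = 1 \<and> irred_artin_schreier T lam)"
    and x_eq: "x ^ 2 = 1 + \<beta>"
    and y_eq: "y ^ 2 = (1 + (\<omega> + \<mu>) ^ 2 * \<beta>) * (1 + 4 * lam)"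
    and M_gen: "gen_field K {x, y} = UNIV"
    and L_def: "L = gen_field K {x}"
    and Y_def: "y * Y = 1 + (\<omega> + \<mu>) * (x - 1)"
  shows
    "(4 * b < v 2 \<longrightarrow>
        one_plus v ((\<beta> / 2) * (x - 1)) L
          \<subseteq> setmul (squares (one_plus v 1 UNIV)) (one_plus v ((\<beta> / 2) * (Y - 1)) UNIV))
     \<and> one_plus v \<beta> L
          \<subseteq> setmul (squares (one_plus v 1 UNIV)) (one_plus v ((x - 1) * (Y - 1)) UNIV)
     \<and> (4 * b < v 2 \<longrightarrow>
        setmul (setmul (one_plus v 1 K) (squares (one_plus v 1 L))) (one_plus v ((\<beta> / 2) * (x - 1)) L)
          \<subseteq> setmul (setmul (one_plus v 1 K) (squares (one_plus v 1 UNIV))) (one_plus v ((\<beta> / 2) * (Y - 1)) UNIV))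
     \<and> setmul (setmul (one_plus v 1 K) (squares (one_plus v 1 L))) (one_plus v \<beta> L)
          \<subseteq> setmul (setmul (one_plus v 1 K) (squares (one_plus v 1 UNIV))) (one_plus v ((x - 1) * (Y - 1)) UNIV)"
proof -
  interpret lsetup v K T L b q \<beta> \<omega> \<mu> lam x y Y
    by unfold_locales (fact assms)+
  show ?thesis by (rule all_parts)
qed

end
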